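(* Let $G=(X,b,m,c)$ be a weighted graph with $c=0$ and let $p\in(1,\infty)$. The following are equivalent: (i) $G$ is $p$-parabolic; (ii) every non-negative $p$-superharmonic function on $X$ is constant; (iii) every $p$-superharmonic function on $X$ belonging to $D^p$ is constant; (iv) every $p$-superharmonic function on $X$ belonging to $D_0^p$ is constant; (v) every bounded $p$-superharmonic function on $X$ is constant; (vi) every $p$-superharmonic function on $X$ which is bounded from below is constant; (vii) there exists a non-zero $p$-harmonic function in $D_0^p$.
   Context: Weighted graph $G=(X,b,m,c)$: $X$ countably infinite; $b$ symmetric, nonnegative, zero on the diagonal, $\sum_yb(x,y)<\infty$; $m>0$; $c\ge0$; $x\sim y$ iff $b(x,y)>0$; $X$ connected. $\mathcal{E}_p(f)=\frac12\sum_{x,y}b(x,y)|f(x)-f(y)|^p+\sum_xc(x)|f(x)|^p$, $D^p=\{f:\mathcal{E}_p(f)<\infty\}$, $\|f\|_{o,p}=(\mathcal{E}_p(f)+|f(o)|^p)^{1/p}$ for a fixed $o\in X$, $D_0^p$ the closure of finitely supported functions in $(D^p,\|\cdot\|_{o,p})$. $G$ is $p$-parabolic if $\inf\{\mathcal{E}_p(\varphi):\varphi\text{ finitely supported},\varphi\ge1\text{ on }K\}=0$ for all finite $K$. $a^{\langle p-1\rangle}=|a|^{p-2}a$; $F^p(X)=\{f:\sum_yb(x,y)|f(x)-f(y)|^{p-1}<\infty\ \forall x\}$; $\Delta_pf(x)=\frac1{m(x)}\sum_yb(x,y)(f(x)-f(y))^{\langle p-1\rangle}$. $f$ is $p$-superharmonic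 (resp. $p$-harmonic) on $X$ if $f\in F^p(X)$ and $\Delta_pf\ge0$ (resp. $=0$) on $X$. *)

theory Defs
  imports "HOL-Analysis.Analysis"
begin

definition weighted_graph :: "('a \<Rightarrow> 'a \<Rightarrow> real) \<Rightarrow> ('a \<Rightarrow> real) \<Rightarrow> ('a \<Rightarrow> real) \<Rightarrow> bool" where
  "weighted_graph b m c \<longleftrightarrow>
     countable (UNIV :: 'a set) \<and> infinite (UNIV :: 'a set) \<and>
     (\<forall>x y. b x y = b y x) \<and> (\<forall>x y. 0 \<le> b x y) \<and> (\<forall>x. b x x = 0) \<and>
     (\<forall>x. (\<lambda>y. b x y) summable_on UNIV) \<and>
     (\<forall>x. 0 < m x) \<and> (\<forall>x. 0 \<le> c x) \<and>
     (\<forall>x y. (x, y) \<in> {(u, v). 0 < b u v}\<^sup>*)"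

definition in_Dp :: "real \<Rightarrow> ('a \<Rightarrow> 'a \<Rightarrow> real) \<Rightarrow> ('a \<Rightarrow> real) \<Rightarrow> ('a \<Rightarrow> real) \<Rightarrow> bool" where
  "in_Dp p b c f \<longleftrightarrow>
     (\<lambda>(x, y). b x y * \<bar>f x - f y\<bar> powr p) summable_on UNIV \<and>
     (\<lambda>x. c x * \<bar>f x\<bar> powr p) summable_on UNIV"

text \<open>The p-energy (meaningful for f in D^p).\<close>
definition energy :: "real \<Rightarrow> ('a \<Rightarrow> 'a \<Rightarrow> real) \<Rightarrow> ('a \<Rightarrow> real) \<Rightarrow> ('a \<Rightarrow> real) \<Rightarrow> real" where
  "energy p b c f =
     (1/2) * infsum (\<lambda>(x, y). b x y * \<bar>f x - f y\<bar> powr p) UNIV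
     + infsum (\<lambda>x. c x * \<bar>f x\<bar> powr p) UNIV"

definition norm_op :: "real \<Rightarrow> ('a \<Rightarrow> 'a \<Rightarrow> real) \<Rightarrow> ('a \<Rightarrow> real) \<Rightarrow> 'a \<Rightarrow> ('a \<Rightarrow> real) \<Rightarrow> real" where
  "norm_op p b c x0 f = (energy p b c f + \<bar>f x0\<bar> powr p) powr (1 / p)"

definition fin_supp :: "('a \<Rightarrow> real) \<Rightarrow> bool" where
  "fin_supp f \<longleftrightarrow> finite {x. f x \<noteq> 0}"

text \<open>D_0^p: closure of finitely supported functions in (D^p, norm_op).\<close>
definition in_D0p :: "real \<Rightarrow> ('a \<Rightarrow> 'a \<Rightarrow> real) \<Rightarrow> ('a \<Rightarrow> real) \<Rightarrow> 'a \<Rightarrow> ('a \<Rightarrow> real) \<Rightarrow> bool" where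
  "in_D0p p b c x0 f \<longleftrightarrow> in_Dp p b c f \<and>
     (\<forall>\<epsilon>>0. \<exists>\<phi>. fin_supp \<phi> \<and> norm_op p b c x0 (\<lambda>x. f x - \<phi> x) < \<epsilon>)"

definition p_parabolic :: "real \<Rightarrow> ('a \<Rightarrow> 'a \<Rightarrow> real) \<Rightarrow> ('a \<Rightarrow> real) \<Rightarrow> bool" where
  "p_parabolic p b c \<longleftrightarrow>
     (\<forall>K. finite K \<longrightarrow>
        (INF \<phi> \<in> {\<phi>. fin_supp \<phi> \<and> (\<forall>x\<in>K. 1 \<le> \<phi> x)}. energy p b c \<phi>) = 0)"

definition signed_pow :: "real \<Rightarrow> real \<Rightarrow> real" where
  "signed_pow a q = \<bar>a\<bar> powr (q - 1) * a"

definition in_Fp :: "real \<Rightarrow> ('a \<Rightarrow> 'a \<Rightarrow> real) \<Rightarrow> ('a \<Rightarrow> real) \<Rightarrow> bool" where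
  "in_Fp p b f \<longleftrightarrow> (\<forall>x. (\<lambda>y. b x y * \<bar>f x - f y\<bar> powr (p - 1)) summable_on UNIV)"

definition p_laplacian :: "real \<Rightarrow> ('a \<Rightarrow> 'a \<Rightarrow> real) \<Rightarrow> ('a \<Rightarrow> real) \<Rightarrow> ('a \<Rightarrow> real) \<Rightarrow> 'a \<Rightarrow> real" where
  "p_laplacian p b m f x = (1 / m x) * infsum (\<lambda>y. b x y * signed_pow (f x - f y) (p - 1)) UNIV"

definition p_superharmonic :: "real \<Rightarrow> ('a \<Rightarrow> 'a \<Rightarrow> real) \<Rightarrow> ('a \<Rightarrow> real) \<Rightarrow> ('a \<Rightarrow> real) \<Rightarrow> bool" where
  "p_superharmonic p b m f \<longleftrightarrow> in_Fp p b f \<and> (\<forall>x. 0 \<le> p_laplacian p b m f x)"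

definition p_harmonic :: "real \<Rightarrow> ('a \<Rightarrow> 'a \<Rightarrow> real) \<Rightarrow> ('a \<Rightarrow> real) \<Rightarrow> ('a \<Rightarrow> real) \<Rightarrow> bool" where
  "p_harmonic p b m f \<longleftrightarrow> in_Fp p b f \<and> (\<forall>x. p_laplacian p b m f x = 0)"

definition is_constant :: "('a \<Rightarrow> real) \<Rightarrow> bool" where
  "is_constant f \<longleftrightarrow> (\<exists>k. \<forall>x. f x = k)"

end

theory Submission
  imports Defs
begin


definition sgp :: "real \<Rightarrow> real \<Rightarrow> real" where
  "sgp p a = \<bar>a\<bar> powr (p - 2) * a"

lemma signed_pow_sgp: "signed_pow a (p - 1) = sgp p a"
  by (simp add: signed_pow_def sgp_def)

lemma sgp_alt: "sgp p a = sgn a * \<bar>a\<bar> powr (p - 1)"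
proof (cases "a = 0")
  case False
  have "\<bar>a\<bar> powr (p - 1) = \<bar>a\<bar> powr (p - 2) * \<bar>a\<bar>"
    using powr_add[of "\<bar>a\<bar>" "p - 2" 1] False by simp
  then show ?thesis using False by (auto simp: sgp_def sgn_if)
qed (simp add: sgp_def)

lemma sgp_mult_self: "sgp p a * a = \<bar>a\<bar> powr p"
proof (cases "a = 0")
  case False
  have "\<bar>a\<bar> powr p = \<bar>a\<bar> powr (p - 2) * \<bar>a\<bar> powr 2"
    using powr_add[of "\<bar>a\<bar>" "p - 2" 2] False by simp
  moreover have "\<bar>a\<bar> powr 2 = a * a" using False by (simp add: powr_numeral power2_eq_square)
  ultimately show ?thesis by (simp add: sgp_def)
qed (simp add: sgp_def)

lemma abs_sgp: "\<bar>sgp p a\<bar> = \<bar>a\<bar> powr (p - 1)"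
  by (auto simp: sgp_alt abs_mult sgn_if)

lemma sgp_neg: "sgp p (- a) = - sgp p a"
  by (simp add: sgp_def)

lemma sgp_zero[simp]: "sgp p 0 = 0"
  by (simp add: sgp_def)

lemma sgp_pos_iff: "0 < sgp p a \<longleftrightarrow> 0 < a"
  by (auto simp: sgp_alt sgn_if)

lemma sgp_nonneg_iff: "0 \<le> sgp p a \<longleftrightarrow> 0 \<le> a"
  by (auto simp: sgp_alt sgn_if)

lemma sgp_mono:
  assumes "1 < p" "a \<le> b" shows "sgp p a \<le> sgp p b"
proof -
  consider "0 \<le> a" | "b \<le> 0" | "a < 0" "0 < b" by linarith
  then show ?thesis
  proof cases
    case 1 then show ?thesis using assms
      by (auto simp: sgp_alt sgn_if intro!: powr_mono2)
  next
    case 2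
    have "\<bar>b\<bar> powr (p - 1) \<le> \<bar>a\<bar> powr (p - 1)"
      using assms 2 by (intro powr_mono2) auto
    then show ?thesis using 2 assms by (auto simp: sgp_alt sgn_if)
  next
    case 3
    have "sgp p a \<le> 0" "0 < sgp p b" using 3 sgp_pos_iff[of p b] sgp_nonneg_iff[of p a] by auto
    then show ?thesis by linarith
  qed
qed

lemma sgp_strict_mono:
  assumes "1 < p" "a < b" shows "sgp p a < sgp p b"
proof -
  consider "0 \<le> a" | "b \<le> 0" | "a < 0" "0 < b" by linarith
  then show ?thesis
  proof cases
    case 1 then show ?thesis using assms
      by (auto simp: sgp_alt sgn_if intro!: powr_less_mono2)
  next
    case 2
    have "\<bar>b\<bar> powr (p - 1) < \<bar>a\<bar> powr (p - 1)"
      using assms 2 by (intro powr_less_mono2) auto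
    then show ?thesis using 2 assms by (auto simp: sgp_alt sgn_if)
  next
    case 3
    have "sgp p a \<le> 0" "0 < sgp p b" using 3 sgp_pos_iff[of p b] sgp_nonneg_iff[of p a] by auto
    then show ?thesis by linarith
  qed
qed

lemma powr_convex_ineq:
  fixes X Y t p :: real
  assumes "1 \<le> p" "0 \<le> X" "0 \<le> Y" "0 \<le> t" "t \<le> 1"
  shows "(t * X + (1 - t) * Y) powr p \<le> t * X powr p + (1 - t) * Y powr p"
proof -
  consider "X = 0" | "Y = 0" | "0 < X" "0 < Y" using assms by linarith
  then show ?thesis
  proof cases
    case 1
    have "((1 - t) * Y) powr p = (1 - t) powr p * Y powr p"
      using assms by (simp add: powr_mult)
    also have "\<dots> \<le> (1 - t) * Y powr p"
    proof (rule mult_right_mono)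
      show "(1 - t) powr p \<le> 1 - t"
        using assms powr_le1[of p "1 - t"]
        by (cases "t = 1") (auto intro: order.trans[OF powr_mono'] simp: powr_mono')
    qed simp
    finally show ?thesis using 1 by simp
  next
    case 2
    have "(t * X) powr p = t powr p * X powr p"
      using assms by (simp add: powr_mult)
    also have "\<dots> \<le> t * X powr p"
    proof (rule mult_right_mono)
      show "t powr p \<le> t"
        using assms by (cases "t = 0") (auto intro: order.trans[OF powr_mono'] simp: powr_mono')
    qed simp
    finally show ?thesis using 2 by simp
  next
    case 3
    have "((1 - t) * Y + t * X) powr p \<le> (1 - t) * Y powr p + t * X powr p"
      using convex_onD[OF powr_convex[OF assms(1)], of t Y X] 3 assms by auto
    then show ?thesis by (simp add: add.commute)
  qed
qed

lemma abs_powr_convex_ineq: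
  fixes a b t p :: real
  assumes "1 \<le> p" "0 \<le> t" "t \<le> 1"
  shows "\<bar>t * a + (1 - t) * b\<bar> powr p \<le> t * \<bar>a\<bar> powr p + (1 - t) * \<bar>b\<bar> powr p"
proof -
  have "\<bar>t * a + (1 - t) * b\<bar> \<le> t * \<bar>a\<bar> + (1 - t) * \<bar>b\<bar>"
    using assms by (metis abs_mult abs_of_nonneg abs_triangle_ineq diff_ge_0_iff_ge)
  then have "\<bar>t * a + (1 - t) * b\<bar> powr p \<le> (t * \<bar>a\<bar> + (1 - t) * \<bar>b\<bar>) powr p"
    using assms by (intro powr_mono2) auto
  also have "\<dots> \<le> t * \<bar>a\<bar> powr p + (1 - t) * \<bar>b\<bar> powr p"
    using assms by (intro powr_convex_ineq) auto
  finally show ?thesis .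
qed

lemma abs_add_powr:
  fixes a b p :: real
  assumes "1 \<le> p"
  shows "\<bar>a + b\<bar> powr p \<le> 2 powr (p - 1) * (\<bar>a\<bar> powr p + \<bar>b\<bar> powr p)"
proof -
  have h: "(1/2) * a + (1 - 1/2) * b = (a + b) / 2" by simp
  have "\<bar>a + b\<bar> = 2 * \<bar>(1/2) * a + (1 - 1/2) * b\<bar>" unfolding h by simp
  then have "\<bar>a + b\<bar> powr p = 2 powr p * \<bar>(1/2) * a + (1 - 1/2) * b\<bar> powr p"
    by (simp add: powr_mult)
  also have "\<dots> \<le> 2 powr p * ((1/2) * \<bar>a\<bar> powr p + (1 - 1/2) * \<bar>b\<bar> powr p)"
    using abs_powr_convex_ineq[OF assms, of "1/2" a b] by (intro mult_left_mono) auto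
  also have "\<dots> = 2 powr (p - 1) * (\<bar>a\<bar> powr p + \<bar>b\<bar> powr p)"
    by (simp add: powr_diff algebra_simps)
  finally show ?thesis .
qed

lemma abs_diff_powr:
  fixes a b p :: real
  assumes "1 \<le> p"
  shows "\<bar>a - b\<bar> powr p \<le> 2 powr (p - 1) * (\<bar>a\<bar> powr p + \<bar>b\<bar> powr p)"
  using abs_add_powr[OF assms, of a "-b"] by simp

lemma tangent_pos:
  fixes a c p :: real
  assumes "1 < p" "0 < c"
  shows "\<bar>c\<bar> powr p + p * sgp p c * (a - c) \<le> \<bar>a\<bar> powr p"
proof (cases "0 < a")
  case True
  have d: "((\<lambda>x. x powr p) has_field_derivative p * c powr (p - 1)) (at c within {0<..})"
    using has_real_derivative_powr[OF assms(2)] has_field_derivative_at_within by blast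
  have "c powr p + p * c powr (p - 1) * (a - c) \<le> a powr p"
    using convex_on_imp_above_tangent[OF powr_convex[of p] _ _ _ d, of a] assms True
    by (simp add: interior_open)
  then show ?thesis using assms True by (simp add: sgp_alt)
next
  case False
  have "c powr p = c powr (p - 1) * c" using powr_add[of c "p - 1" 1] assms by simp
  then have "c powr p + p * c powr (p - 1) * (a - c) = c powr (p - 1) * ((1 - p) * c + p * a)"
    by (simp add: algebra_simps)
  also have "\<dots> \<le> 0"
  proof -
    have "(1 - p) * c \<le> 0" using assms by (intro mult_nonpos_nonneg) auto
    moreover have "p * a \<le> 0" using assms False by (intro mult_nonneg_nonpos) auto
    ultimately show ?thesis using assms by (intro mult_nonneg_nonpos) auto
  qed
  finally have "c powr p + p * c powr (p - 1) * (a - c) \<le> \<bar>a\<bar> powr p"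
    by (meson order.trans powr_ge_zero)
  then show ?thesis using assms by (simp add: sgp_alt)
qed

lemma tangent_abs_powr:
  fixes a c p :: real
  assumes "1 < p"
  shows "\<bar>c\<bar> powr p + p * sgp p c * (a - c) \<le> \<bar>a\<bar> powr p"
proof -
  consider "c = 0" | "0 < c" | "c < 0" by linarith
  then show ?thesis
  proof cases
    case 1 then show ?thesis by simp
  next
    case 2 then show ?thesis using tangent_pos[OF assms] by blast
  next
    case 3
    have "\<bar>-c\<bar> powr p + p * sgp p (-c) * ((-a) - (-c)) \<le> \<bar>-a\<bar> powr p"
      using tangent_pos[OF assms, of "-c" "-a"] 3 by simp
    then show ?thesis by (simp add: sgp_neg algebra_simps)
  qed
qed

lemma young_q:
  fixes a b p :: real
  assumes "1 < p" "0 \<le> a" "0 \<le> b"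
  shows "a powr (p - 1) * b \<le> ((p - 1) / p) * a powr p + (1 / p) * b powr p"
proof -
  have "a powr (p - 1) * b \<le> (a powr (p - 1)) powr (p / (p - 1)) / (p / (p - 1)) + b powr p / p"
    using assms by (intro Youngs_inequality) (auto simp: field_simps)
  also have "(a powr (p - 1)) powr (p / (p - 1)) = a powr p"
    using assms by (simp add: powr_powr)
  finally show ?thesis using assms by (simp add: field_simps)
qed

lemma picone_aux:
  fixes s t \<alpha> \<beta> p :: real
  assumes "1 < p" "0 < t" "t < s" "0 \<le> \<alpha>" "0 \<le> \<beta>"
  shows "(s - t) powr (p - 1) * (\<alpha> powr p / s powr (p - 1) - \<beta> powr p / t powr (p - 1))
           \<le> \<bar>\<alpha> - \<beta>\<bar> powr p"
proof (cases "\<alpha> \<le> \<beta>")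
  case True
  have "\<alpha> powr p / s powr (p - 1) \<le> \<beta> powr p / s powr (p - 1)"
    using assms True by (intro divide_right_mono powr_mono2) auto
  also have "\<dots> \<le> \<beta> powr p / t powr (p - 1)"
    using assms by (intro divide_left_mono powr_mono2) auto
  finally have "(s - t) powr (p - 1) * (\<alpha> powr p / s powr (p - 1) - \<beta> powr p / t powr (p - 1)) \<le> 0"
    by (intro mult_nonneg_nonpos) auto
  then show ?thesis by (meson order.trans powr_ge_zero)
next
  case False
  define q where "q = p - 1"
  have q: "0 < q" using assms by (simp add: q_def)
  define \<theta> where "\<theta> = (s - t) / s"
  have th: "0 < \<theta>" "\<theta> < 1" "1 - \<theta> = t / s" using assms by (auto simp: \<theta>_def field_simps)
  define X where "X = (\<alpha> - \<beta>) / \<theta>"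
  define Y where "Y = \<beta> / (1 - \<theta>)"
  have XY: "0 \<le> X" "0 \<le> Y" using th False assms by (auto simp: X_def Y_def)
  have "1 - \<theta> \<noteq> 0" "\<theta> \<noteq> 0" using th by auto
  then have "\<alpha> = \<theta> * X + (1 - \<theta>) * Y" by (simp add: X_def Y_def)
  then have conv: "\<alpha> powr p \<le> \<theta> * X powr p + (1 - \<theta>) * Y powr p"
    using powr_convex_ineq[of p X Y \<theta>] assms th XY by auto
  have pq: "p = q + 1" by (simp add: q_def)
  have e1: "\<theta> * X powr p = (\<alpha> - \<beta>) powr p / \<theta> powr q"
  proof -
    have "X powr p = (\<alpha> - \<beta>) powr p / \<theta> powr p" using th False by (simp add: X_def powr_divide)
    moreover have "\<theta> powr p = \<theta> powr q * \<theta>" using th by (simp add: pq powr_add)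
    ultimately show ?thesis using th by (simp add: field_simps)
  qed
  have e2: "(1 - \<theta>) * Y powr p = \<beta> powr p / (1 - \<theta>) powr q"
  proof -
    have om: "0 < 1 - \<theta>" using th by simp
    have h1: "Y powr p = \<beta> powr p / (1 - \<theta>) powr p" unfolding Y_def by (rule powr_divide)
    have h2: "(1 - \<theta>) powr p = (1 - \<theta>) powr q * (1 - \<theta>)" using om by (simp add: pq powr_add)
    have "(1 - \<theta>) * Y powr p = (1 - \<theta>) * (\<beta> powr p / ((1 - \<theta>) powr q * (1 - \<theta>)))"
      unfolding h1 h2 ..
    also have "\<dots> = \<beta> powr p / (1 - \<theta>) powr q" using om by (simp add: field_simps)
    finally show ?thesis .
  qed
  have tq: "\<theta> powr q = (s - t) powr q / s powr q" using assms by (simp add: \<theta>_def powr_divide)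
  have tq2: "(1 - \<theta>) powr q = t powr q / s powr q" using assms th by (simp add: powr_divide)
  have pos: "0 < \<theta> powr q" "0 < (1 - \<theta>) powr q" "0 < s powr q" "0 < t powr q" "0 < (s - t) powr q"
    using th assms by auto
  from conv e1 e2 have "\<alpha> powr p \<le> (\<alpha> - \<beta>) powr p / \<theta> powr q + \<beta> powr p / (1 - \<theta>) powr q"
    by simp
  then have "\<theta> powr q * \<alpha> powr p \<le> (\<alpha> - \<beta>) powr p + \<theta> powr q * (\<beta> powr p / (1 - \<theta>) powr q)"
    using pos by (simp add: field_simps)
  then have "(s - t) powr q * \<alpha> powr p / s powr q \<le> (\<alpha> - \<beta>) powr p + (s - t) powr q * \<beta> powr p / t powr q"
    using pos unfolding tq tq2 by (simp add: field_simps)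
  then show ?thesis using False pos by (simp add: q_def[symmetric] field_simps)
qed

lemma picone:
  fixes s t \<alpha> \<beta> p :: real
  assumes "1 < p" "0 < s" "0 < t" "0 \<le> \<alpha>" "0 \<le> \<beta>"
  shows "sgp p (s - t) * (\<alpha> powr p / s powr (p - 1) - \<beta> powr p / t powr (p - 1))
           \<le> \<bar>\<alpha> - \<beta>\<bar> powr p"
proof -
  consider "s = t" | "t < s" | "s < t" by linarith
  then show ?thesis
  proof cases
    case 1 then show ?thesis by simp
  next
    case 2 then show ?thesis using picone_aux[OF assms(1,3) 2 assms(4,5)] by (simp add: sgp_alt)
  next
    case 3
    have "(t - s) powr (p - 1) * (\<beta> powr p / t powr (p - 1) - \<alpha> powr p / s powr (p - 1))
           \<le> \<bar>\<beta> - \<alpha>\<bar> powr p" using picone_aux[OF assms(1,2) 3 assms(5,4)] .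
    then show ?thesis using 3 by (simp add: sgp_alt abs_minus_commute algebra_simps)
  qed
qed


lemma sum_cmp:
  fixes f g :: "'i \<Rightarrow> real"
  assumes "g summable_on A" "\<And>x. x \<in> A \<Longrightarrow> \<bar>f x\<bar> \<le> g x"
  shows "f summable_on A"
proof -
  have "(\<lambda>x. \<bar>f x\<bar>) summable_on A"
    by (rule summable_on_comparison_test[OF assms(1)]) (use assms in auto)
  then have "(\<lambda>x. norm (f x)) summable_on A" by simp
  then show ?thesis using summable_on_iff_abs_summable_on_real by blast
qed

lemma summable_on_diff:
  fixes f g :: "'i \<Rightarrow> real"
  assumes "f summable_on A" "g summable_on A"
  shows "(\<lambda>x. f x - g x) summable_on A"
  using summable_on_add[OF assms(1) summable_on_uminus[THEN iffD2, OF assms(2)]] by simp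

lemma infsum_diff:
  fixes f g :: "'i \<Rightarrow> real"
  assumes "f summable_on A" "g summable_on A"
  shows "infsum (\<lambda>x. f x - g x) A = infsum f A - infsum g A"
  using infsum_add[OF assms(1) summable_on_uminus[THEN iffD2, OF assms(2)]] by (simp add: infsum_uminus)

lemma infsum_sum_fin:
  fixes f :: "'s \<Rightarrow> 'i \<Rightarrow> real"
  assumes "finite S" "\<And>s. s \<in> S \<Longrightarrow> f s summable_on A"
  shows "(\<lambda>x. \<Sum>s\<in>S. f s x) summable_on A \<and> infsum (\<lambda>x. \<Sum>s\<in>S. f s x) A = (\<Sum>s\<in>S. infsum (f s) A)"
  using assms
proof (induction S rule: finite_induct)
  case empty then show ?case by simp
next
  case (insert s S)
  then have IH: "(\<lambda>x. \<Sum>s\<in>S. f s x) summable_on A" "infsum (\<lambda>x. \<Sum>s\<in>S. f s x) A = (\<Sum>s\<in>S. infsum (f s) A)"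
    by auto
  have fs: "f s summable_on A" using insert by auto
  show ?case using insert(1,2) IH summable_on_add[OF fs IH(1)] infsum_add[OF fs IH(1)] by simp
qed

lemma row_lemma:
  fixes f :: "'b \<Rightarrow> real" and s :: 'a
  assumes "f summable_on UNIV"
  shows "(\<lambda>z. if fst z = s then f (snd z) else 0) summable_on UNIV"
    and "infsum (\<lambda>z. if fst z = s then f (snd z) else 0) UNIV = infsum f UNIV"
proof -
  let ?G = "\<lambda>z. if fst z = s then f (snd z) else 0"
  have inj: "inj_on (Pair s) UNIV" by (auto simp: inj_on_def)
  have c: "?G \<circ> Pair s = f" by auto
  have e1: "?G summable_on UNIV \<longleftrightarrow> ?G summable_on range (Pair s)"
    by (rule summable_on_cong_neutral) auto
  have e2: "infsum ?G UNIV = infsum ?G (range (Pair s))"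
    by (rule infsum_cong_neutral) auto
  show "?G summable_on UNIV" using e1 summable_on_reindex[OF inj, of ?G] c assms by simp
  show "infsum ?G UNIV = infsum f UNIV" using e2 infsum_reindex[OF inj, of ?G] c by simp
qed

lemma col_lemma:
  fixes f :: "'a \<Rightarrow> real" and s :: 'b
  assumes "f summable_on UNIV"
  shows "(\<lambda>z. if snd z = s then f (fst z) else 0) summable_on UNIV"
    and "infsum (\<lambda>z. if snd z = s then f (fst z) else 0) UNIV = infsum f UNIV"
proof -
  let ?G = "\<lambda>z. if snd z = s then f (fst z) else 0"
  have inj: "inj_on (\<lambda>x. (x, s)) UNIV" by (auto simp: inj_on_def)
  have c: "?G \<circ> (\<lambda>x. (x, s)) = f" by auto
  have e1: "?G summable_on UNIV \<longleftrightarrow> ?G summable_on range (\<lambda>x. (x, s))"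
    by (rule summable_on_cong_neutral) auto
  have e2: "infsum ?G UNIV = infsum ?G (range (\<lambda>x. (x, s)))"
    by (rule infsum_cong_neutral) auto
  show "?G summable_on UNIV" using e1 summable_on_reindex[OF inj, of ?G] c assms by simp
  show "infsum ?G UNIV = infsum f UNIV" using e2 infsum_reindex[OF inj, of ?G] c by simp
qed

lemma le_infsum_single:
  fixes f :: "'i \<Rightarrow> real"
  assumes "f summable_on A" "\<And>x. x \<in> A \<Longrightarrow> 0 \<le> f x" "a \<in> A"
  shows "f a \<le> infsum f A"
  using finite_sum_le_infsum[OF assms(1), of "{a}"] assms by auto

lemma tail_small:
  fixes g :: "'i \<Rightarrow> real"
  assumes "g summable_on UNIV" "0 < e"
  obtains F where "finite F" "infsum g (UNIV - F) \<le> e" "g summable_on (UNIV - F)"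
    "infsum g UNIV = sum g F + infsum g (UNIV - F)"
proof -
  obtain F where F: "finite F" "dist (sum g F) (infsum g UNIV) \<le> e"
    using infsum_finite_approximation[OF assms] by auto
  have s2: "g summable_on (UNIV - F)" using summable_on_subset_banach[OF assms(1)] by auto
  have "infsum g UNIV = infsum g (F \<union> (UNIV - F))" by simp
  also have "\<dots> = infsum g F + infsum g (UNIV - F)"
    by (rule infsum_Un_disjoint) (use s2 F in auto)
  finally have eq: "infsum g UNIV = sum g F + infsum g (UNIV - F)" using F by simp
  then have "infsum g (UNIV - F) \<le> e" using F(2) by (simp add: dist_real_def)
  then show ?thesis using that F eq s2 by blast
qed

lemma split_infsum:
  fixes g :: "'i \<Rightarrow> real"
  assumes "g summable_on UNIV" "finite F"
  shows "g summable_on (UNIV - F)" "infsum g UNIV = sum g F + infsum g (UNIV - F)"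
proof -
  show s2: "g summable_on (UNIV - F)" using summable_on_subset_banach[OF assms(1)] by auto
  have "infsum g UNIV = infsum g (F \<union> (UNIV - F))" by simp
  also have "\<dots> = infsum g F + infsum g (UNIV - F)"
    by (rule infsum_Un_disjoint) (use s2 assms in auto)
  finally show "infsum g UNIV = sum g F + infsum g (UNIV - F)" using assms by simp
qed

lemma dct_infsum:
  fixes f :: "nat \<Rightarrow> 'i \<Rightarrow> real"
  assumes g: "g summable_on UNIV" and bd: "\<And>n x. \<bar>f n x\<bar> \<le> g x"
    and lim: "\<And>x. (\<lambda>n. f n x) \<longlonglongrightarrow> h x"
  shows "(\<lambda>n. infsum (f n) UNIV) \<longlonglongrightarrow> infsum h UNIV"
proof (rule tendstoI)
  fix e :: real assume e: "0 < e"
  have hb: "\<bar>h x\<bar> \<le> g x" for x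
    using tendsto_rabs[OF lim[of x]] bd by (intro LIMSEQ_le_const2[of "\<lambda>n. \<bar>f n x\<bar>"]) auto
  have fs: "f n summable_on UNIV" for n using sum_cmp[OF g] bd by blast
  have hs: "h summable_on UNIV" using sum_cmp[OF g] hb by blast
  obtain F where F: "finite F" "infsum g (UNIV - F) \<le> e/4" "g summable_on (UNIV - F)"
    using tail_small[OF g, of "e/4"] e by auto
  have tl: "\<bar>infsum k (UNIV - F)\<bar> \<le> e/4" if "\<And>x. \<bar>k x\<bar> \<le> g x" for k
  proof -
    have ks: "k summable_on (UNIV - F)" using sum_cmp[OF F(3)] that by blast
    have ms: "(\<lambda>x. - g x) summable_on (UNIV - F)" using F(3) summable_on_uminus by blast
    have "infsum k (UNIV - F) \<le> infsum g (UNIV - F)"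
      using infsum_mono[OF ks F(3)] that abs_le_D1 by blast
    moreover have "infsum (\<lambda>x. - g x) (UNIV - F) \<le> infsum k (UNIV - F)"
    proof (rule infsum_mono[OF ms ks])
      fix x show "- g x \<le> k x" using that[of x] by linarith
    qed
    then have "- infsum g (UNIV - F) \<le> infsum k (UNIV - F)" by (simp add: infsum_uminus)
    ultimately show ?thesis using F(2) by linarith
  qed
  have "(\<lambda>n. \<Sum>x\<in>F. f n x - h x) \<longlonglongrightarrow> (\<Sum>x\<in>F. h x - h x)"
    by (intro tendsto_sum tendsto_diff lim tendsto_const)
  then have "(\<lambda>n. \<Sum>x\<in>F. f n x - h x) \<longlonglongrightarrow> 0" by simp
  then have ev: "eventually (\<lambda>n. \<bar>\<Sum>x\<in>F. f n x - h x\<bar> < e/4) sequentially"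
    using e by (auto dest!: tendstoD[where e = "e/4"] simp: dist_real_def)
  show "eventually (\<lambda>n. dist (infsum (f n) UNIV) (infsum h UNIV) < e) sequentially"
    using ev
  proof eventually_elim
    case (elim n)
    have a: "infsum (f n) UNIV = sum (f n) F + infsum (f n) (UNIV - F)" using split_infsum[OF fs F(1)] by blast
    have b: "infsum h UNIV = sum h F + infsum h (UNIV - F)" using split_infsum[OF hs F(1)] by blast
    have "\<bar>infsum (f n) (UNIV - F)\<bar> \<le> e/4" using tl bd by blast
    moreover have "\<bar>infsum h (UNIV - F)\<bar> \<le> e/4" using tl hb by blast
    moreover have "sum (f n) F - sum h F = (\<Sum>x\<in>F. f n x - h x)" by (simp add: sum_subtractf)
    ultimately show ?case using elim a b e by (simp add: dist_real_def)
  qed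
qed

lemma fatou_infsum:
  fixes f :: "nat \<Rightarrow> 'i \<Rightarrow> real"
  assumes nn: "\<And>n x. 0 \<le> f n x" and fs: "\<And>n. f n summable_on UNIV"
    and lim: "\<And>x. (\<lambda>n. f n x) \<longlonglongrightarrow> h x"
    and L: "(\<lambda>n. infsum (f n) UNIV) \<longlonglongrightarrow> L"
  shows "h summable_on UNIV" "infsum h UNIV \<le> L"
proof -
  have hn: "0 \<le> h x" for x using lim[of x] nn by (intro LIMSEQ_le_const) auto
  have fin: "sum h F \<le> L" if "finite F" for F
  proof -
    have "(\<lambda>n. sum (f n) F) \<longlonglongrightarrow> sum h F" by (intro tendsto_sum lim)
    moreover have "sum (f n) F \<le> infsum (f n) UNIV" for n
      using finite_sum_le_infsum[OF fs that] nn by auto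
    ultimately show ?thesis using L by (intro LIMSEQ_le) auto
  qed
  show hs: "h summable_on UNIV"
    by (rule nonneg_bdd_above_summable_on) (use hn fin in \<open>auto intro!: bdd_aboveI2\<close>)
  show "infsum h UNIV \<le> L" by (rule infsum_le_finite_sums[OF hs]) (use fin in auto)
qed

lemma brezis_lite:
  fixes g :: "nat \<Rightarrow> 'i \<Rightarrow> real" and w g0 :: "'i \<Rightarrow> real"
  assumes p: "1 \<le> p" and w: "\<And>i. 0 \<le> w i"
    and gs: "\<And>n. (\<lambda>i. w i * \<bar>g n i\<bar> powr p) summable_on UNIV"
    and g0s: "(\<lambda>i. w i * \<bar>g0 i\<bar> powr p) summable_on UNIV"
    and pw: "\<And>i. (\<lambda>n. g n i) \<longlonglongrightarrow> g0 i"
    and nl: "(\<lambda>n. infsum (\<lambda>i. w i * \<bar>g n i\<bar> powr p) UNIV) \<longlonglongrightarrow> infsum (\<lambda>i. w i * \<bar>g0 i\<bar> powr p) UNIV"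
  shows "\<And>n. (\<lambda>i. w i * \<bar>g n i - g0 i\<bar> powr p) summable_on UNIV"
    and "(\<lambda>n. infsum (\<lambda>i. w i * \<bar>g n i - g0 i\<bar> powr p) UNIV) \<longlonglongrightarrow> 0"
proof -
  define C where "C = 2 powr (p - 1)"
  have C: "0 < C" by (simp add: C_def)
  have pt: "w i * \<bar>a - b\<bar> powr p \<le> C * (w i * \<bar>a\<bar> powr p + w i * \<bar>b\<bar> powr p)" for i a b
    using mult_left_mono[OF abs_diff_powr[OF p, of a b] w[of i]] by (simp add: C_def algebra_simps)
  have sC: "(\<lambda>i. C * (w i * \<bar>g n i\<bar> powr p + w i * \<bar>g0 i\<bar> powr p)) summable_on UNIV" for n
    using summable_on_cmult_right[OF summable_on_add[OF gs g0s]] by simp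
  show ds: "(\<lambda>i. w i * \<bar>g n i - g0 i\<bar> powr p) summable_on UNIV" for n
    by (rule sum_cmp[OF sC]) (use pt w in auto)
  define S0 where "S0 = infsum (\<lambda>i. w i * \<bar>g0 i\<bar> powr p) UNIV"
  define Sn where "Sn n = infsum (\<lambda>i. w i * \<bar>g n i\<bar> powr p) UNIV" for n
  show "(\<lambda>n. infsum (\<lambda>i. w i * \<bar>g n i - g0 i\<bar> powr p) UNIV) \<longlonglongrightarrow> 0"
  proof (rule tendstoI)
    fix e :: real assume e: "0 < e"
    define e' where "e' = e / (2 * (2 * C + 1))"
    have e': "0 < e'" using e C by (simp add: e'_def)
    obtain F where F: "finite F" "infsum (\<lambda>i. w i * \<bar>g0 i\<bar> powr p) (UNIV - F) \<le> e'"
      using tail_small[OF g0s e'] by blast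
    define B where "B n = (\<Sum>i\<in>F. w i * \<bar>g n i - g0 i\<bar> powr p)
        + C * ((Sn n - (\<Sum>i\<in>F. w i * \<bar>g n i\<bar> powr p)) + (S0 - (\<Sum>i\<in>F. w i * \<bar>g0 i\<bar> powr p)))" for n
    have le: "infsum (\<lambda>i. w i * \<bar>g n i - g0 i\<bar> powr p) UNIV \<le> B n" for n
    proof -
      have a: "infsum (\<lambda>i. w i * \<bar>g n i - g0 i\<bar> powr p) UNIV
          = (\<Sum>i\<in>F. w i * \<bar>g n i - g0 i\<bar> powr p) + infsum (\<lambda>i. w i * \<bar>g n i - g0 i\<bar> powr p) (UNIV - F)"
        using split_infsum[OF ds F(1)] by blast
      have b: "Sn n = (\<Sum>i\<in>F. w i * \<bar>g n i\<bar> powr p) + infsum (\<lambda>i. w i * \<bar>g n i\<bar> powr p) (UNIV - F)"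
        using split_infsum[OF gs F(1)] by (simp add: Sn_def)
      have c: "S0 = (\<Sum>i\<in>F. w i * \<bar>g0 i\<bar> powr p) + infsum (\<lambda>i. w i * \<bar>g0 i\<bar> powr p) (UNIV - F)"
        using split_infsum[OF g0s F(1)] by (simp add: S0_def)
      have s1: "(\<lambda>i. w i * \<bar>g n i - g0 i\<bar> powr p) summable_on (UNIV - F)" using split_infsum[OF ds F(1)] by blast
      have s2: "(\<lambda>i. C * (w i * \<bar>g n i\<bar> powr p + w i * \<bar>g0 i\<bar> powr p)) summable_on (UNIV - F)"
        using split_infsum[OF sC F(1)] by blast
      have s3: "(\<lambda>i. w i * \<bar>g n i\<bar> powr p) summable_on (UNIV - F)" using split_infsum[OF gs F(1)] by blast
      have s4: "(\<lambda>i. w i * \<bar>g0 i\<bar> powr p) summable_on (UNIV - F)" using split_infsum[OF g0s F(1)] by blast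
      have "infsum (\<lambda>i. w i * \<bar>g n i - g0 i\<bar> powr p) (UNIV - F)
          \<le> infsum (\<lambda>i. C * (w i * \<bar>g n i\<bar> powr p + w i * \<bar>g0 i\<bar> powr p)) (UNIV - F)"
        by (rule infsum_mono[OF s1 s2]) (rule pt)
      also have "\<dots> = C * (infsum (\<lambda>i. w i * \<bar>g n i\<bar> powr p) (UNIV - F) + infsum (\<lambda>i. w i * \<bar>g0 i\<bar> powr p) (UNIV - F))"
        by (simp add: infsum_cmult_right[OF summable_on_add[OF s3 s4]] infsum_add[OF s3 s4])
      finally show ?thesis using a b c by (simp add: B_def)
    qed
    have "B \<longlonglongrightarrow> (\<Sum>i\<in>F. w i * \<bar>g0 i - g0 i\<bar> powr p)
        + C * ((S0 - (\<Sum>i\<in>F. w i * \<bar>g0 i\<bar> powr p)) + (S0 - (\<Sum>i\<in>F. w i * \<bar>g0 i\<bar> powr p)))"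
      unfolding B_def using p
      by (intro tendsto_intros pw nl[folded Sn_def S0_def]) auto
    then have "B \<longlonglongrightarrow> 2 * C * (S0 - (\<Sum>i\<in>F. w i * \<bar>g0 i\<bar> powr p))" by (simp add: algebra_simps)
    moreover have "S0 - (\<Sum>i\<in>F. w i * \<bar>g0 i\<bar> powr p) \<le> e'"
      using split_infsum[OF g0s F(1)] F(2) by (simp add: S0_def)
    then have m: "2 * C * (S0 - (\<Sum>i\<in>F. w i * \<bar>g0 i\<bar> powr p)) \<le> 2 * C * e'"
      using C by (intro mult_left_mono) auto
    ultimately have "eventually (\<lambda>n. B n < 2 * C * e' + e') sequentially"
      using e' by (auto dest!: tendstoD[where e = e'] elim!: eventually_mono simp: dist_real_def abs_less_iff)
    then show "eventually (\<lambda>n. dist (infsum (\<lambda>i. w i * \<bar>g n i - g0 i\<bar> powr p) UNIV) 0 < e) sequentially"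
    proof (rule eventually_mono)
      fix n assume "B n < 2 * C * e' + e'"
      moreover have "0 \<le> infsum (\<lambda>i. w i * \<bar>g n i - g0 i\<bar> powr p) UNIV"
        using w by (intro infsum_nonneg) auto
      moreover have "2 * C * e' + e' = e / 2"
      proof -
        have "2 * C * e' + e' = (2 * C + 1) * e'" by algebra
        also have "\<dots> = e / 2"
        proof -
          have "2 * C + 1 \<noteq> 0" using C by simp
          then show ?thesis unfolding e'_def by (simp add: field_simps)
        qed
        finally show ?thesis .
      qed
      ultimately show "dist (infsum (\<lambda>i. w i * \<bar>g n i - g0 i\<bar> powr p) UNIV) 0 < e"
        using le[of n] by (simp add: dist_real_def)
    qed
  qed
qed


lemma seqcomp_nat:
  fixes f :: "nat \<Rightarrow> nat \<Rightarrow> real"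
  assumes "\<And>n i. f n i \<in> {0..1}"
  shows "\<exists>r g. strict_mono r \<and> (\<forall>i. (\<lambda>n. f (r n) i) \<longlonglongrightarrow> g i) \<and> (\<forall>i. g i \<in> {0..1})"
proof -
  define S :: "(nat \<Rightarrow> real) set" where "S = PiE UNIV (\<lambda>_. {0..1})"
  have "compactin (product_topology (\<lambda>_. euclidean) UNIV) S"
    unfolding S_def by (simp add: compactin_PiE)
  hence "compact S" by (simp add: euclidean_product_topology)
  hence "seq_compact S" by (simp add: compact_eq_seq_compact_metric)
  moreover have "\<forall>n. f n \<in> S" using assms by (auto simp: S_def)
  ultimately have "\<exists>l\<in>S. \<exists>r. strict_mono r \<and> (f \<circ> r) \<longlonglongrightarrow> l"
    unfolding seq_compact_def by blast
  then obtain l r where l: "l \<in> S" "strict_mono r" "(f \<circ> r) \<longlonglongrightarrow> l"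
    by blast
  have "(\<lambda>n. f (r n) i) \<longlonglongrightarrow> l i" for i
  proof -
    have "isCont (\<lambda>x::nat\<Rightarrow>real. x i) l"
      using continuous_on_eq_continuous_at[of UNIV "\<lambda>x::nat\<Rightarrow>real. x i"] continuous_on_product_coordinates
      by simp
    from isCont_tendsto_compose[OF this l(3)] show ?thesis by (simp add: o_def)
  qed
  moreover have "\<forall>i. l i \<in> {0..1}" using l(1) by (auto simp: S_def)
  ultimately show ?thesis using l(2) by blast
qed

lemma seqcomp_count:
  fixes f :: "nat \<Rightarrow> 'a \<Rightarrow> real"
  assumes cnt: "countable (UNIV :: 'a set)" and f: "\<And>n x. f n x \<in> {0..1}"
  shows "\<exists>r g. strict_mono r \<and> (\<forall>x. (\<lambda>n. f (r n) x) \<longlonglongrightarrow> g x) \<and> (\<forall>x. g x \<in> {0..1})"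
proof -
  obtain enc :: "'a \<Rightarrow> nat" where enc: "inj_on enc UNIV" using cnt by (rule countableE)
  define F where "F n i = f n (inv enc i)" for n i
  have "F n i \<in> {0..1}" for n i using f by (simp add: F_def)
  then obtain r G where rG: "strict_mono r" "\<forall>i. (\<lambda>n. F (r n) i) \<longlonglongrightarrow> G i" "\<forall>i. G i \<in> {0..1}"
    using seqcomp_nat by blast
  have e: "F n (enc x) = f n x" for n x using enc by (simp add: F_def)
  have "(\<lambda>n. f (r n) x) \<longlonglongrightarrow> G (enc x)" for x
  proof -
    have "(\<lambda>n. F (r n) (enc x)) \<longlonglongrightarrow> G (enc x)" using rG by blast
    then show ?thesis by (simp add: e)
  qed
  then show ?thesis using rG by (intro exI[of _ r] exI[of _ "\<lambda>x. G (enc x)"]) auto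
qed

lemma sgp_tendsto:
  fixes f :: "'b \<Rightarrow> real"
  assumes p: "1 < p" and f: "(f \<longlongrightarrow> a) F"
  shows "((\<lambda>n. sgp p (f n)) \<longlongrightarrow> sgp p a) F"
proof (cases "a = 0")
  case False
  have "((\<lambda>n. \<bar>f n\<bar> powr (p - 2) * f n) \<longlongrightarrow> \<bar>a\<bar> powr (p - 2) * a) F"
    using False by (intro tendsto_intros f) auto
  then show ?thesis by (simp add: sgp_def)
next
  case True
  have "((\<lambda>n. \<bar>f n\<bar> powr (p - 1)) \<longlongrightarrow> \<bar>a\<bar> powr (p - 1)) F"
    using p by (intro tendsto_intros f) auto
  then have "((\<lambda>n. \<bar>sgp p (f n)\<bar>) \<longlongrightarrow> 0) F" using True p by (simp add: abs_sgp)
  then show ?thesis using True by (simp add: tendsto_rabs_zero_iff)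
qed

lemma young_eps:
  fixes a b p \<delta> :: real
  assumes "1 < p" "0 < \<delta>" "0 \<le> a" "0 \<le> b"
  shows "a powr (p - 1) * b \<le> \<delta> * a powr p + b powr p / \<delta> powr (p - 1)"
proof (cases "b \<le> \<delta> * a")
  case True
  have "a powr (p - 1) * b \<le> a powr (p - 1) * (\<delta> * a)" using True assms by (intro mult_left_mono) auto
  also have "\<dots> = \<delta> * a powr p" using powr_add[of a "p - 1" 1] assms
    by (cases "a = 0") (auto simp: algebra_simps)
  finally show ?thesis using assms by (smt (verit) divide_nonneg_nonneg powr_ge_zero)
next
  case False
  then have "a \<le> b / \<delta>" using assms by (simp add: field_simps)
  then have "a powr (p - 1) \<le> (b / \<delta>) powr (p - 1)" using assms by (intro powr_mono2) auto
  then have "a powr (p - 1) * b \<le> (b / \<delta>) powr (p - 1) * b" using assms by (intro mult_right_mono) auto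
  also have "\<dots> = b powr p / \<delta> powr (p - 1)" using powr_add[of b "p - 1" 1] assms
    by (cases "b = 0") (auto simp: powr_divide algebra_simps)
  finally show ?thesis using assms by (smt (verit) mult_nonneg_nonneg powr_ge_zero)
qed

locale wgraph =
  fixes b :: "'a \<Rightarrow> 'a \<Rightarrow> real" and m :: "'a \<Rightarrow> real" and p :: real
  assumes cnt: "countable (UNIV :: 'a set)" and infU: "infinite (UNIV :: 'a set)"
    and bsym: "\<And>x y. b x y = b y x" and bnn: "\<And>x y. 0 \<le> b x y" and bdiag: "\<And>x. b x x = 0"
    and bsum: "\<And>x. (\<lambda>y. b x y) summable_on UNIV"
    and mpos: "\<And>x. 0 < m x"
    and conn: "\<And>x y. (x, y) \<in> {(u, v). 0 < b u v}\<^sup>*"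
    and p1: "1 < p"
begin

definition en :: "('a \<Rightarrow> real) \<Rightarrow> 'a \<times> 'a \<Rightarrow> real" where
  "en f z = b (fst z) (snd z) * \<bar>f (fst z) - f (snd z)\<bar> powr p"

definition Dp :: "('a \<Rightarrow> real) \<Rightarrow> bool" where
  "Dp f \<longleftrightarrow> en f summable_on UNIV"

definition NN :: "('a \<Rightarrow> real) \<Rightarrow> real" where
  "NN f = infsum (en f) UNIV"

definition DL :: "('a \<Rightarrow> real) \<Rightarrow> 'a \<Rightarrow> real" where
  "DL f x = infsum (\<lambda>y. b x y * sgp p (f x - f y)) UNIV"

definition Fp :: "('a \<Rightarrow> real) \<Rightarrow> bool" where
  "Fp f \<longleftrightarrow> (\<forall>x. (\<lambda>y. b x y * \<bar>f x - f y\<bar> powr (p - 1)) summable_on UNIV)"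

lemma en_nonneg: "0 \<le> en f z"
  by (simp add: en_def bnn)

lemma NN_nonneg: "0 \<le> NN f"
  unfolding NN_def by (rule infsum_nonneg) (simp add: en_nonneg)

lemma case_en: "(\<lambda>(x, y). b x y * \<bar>f x - f y\<bar> powr p) = en f"
  by (auto simp: en_def fun_eq_iff)

lemma in_Dp_iff: "in_Dp p b (\<lambda>_. 0) f \<longleftrightarrow> Dp f"
  by (simp add: in_Dp_def Dp_def case_en)

lemma energy_eq: "energy p b (\<lambda>_. 0) f = NN f / 2"
  by (simp add: energy_def NN_def case_en)

lemma in_Fp_iff: "in_Fp p b f \<longleftrightarrow> Fp f"
  by (simp add: in_Fp_def Fp_def)

lemma lap_eq: "p_laplacian p b m f x = DL f x / m x"
  by (simp add: p_laplacian_def DL_def signed_pow_sgp)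

lemma superharm_iff: "p_superharmonic p b m f \<longleftrightarrow> Fp f \<and> (\<forall>x. 0 \<le> DL f x)"
proof -
  have "0 \<le> DL f x / m x \<longleftrightarrow> 0 \<le> DL f x" for x
    using mpos[of x] by (simp add: zero_le_divide_iff)
  then show ?thesis by (simp add: p_superharmonic_def in_Fp_iff lap_eq)
qed

lemma harm_iff: "p_harmonic p b m f \<longleftrightarrow> Fp f \<and> (\<forall>x. DL f x = 0)"
proof -
  have "DL f x / m x = 0 \<longleftrightarrow> DL f x = 0" for x
    using mpos[of x] by simp
  then show ?thesis by (simp add: p_harmonic_def in_Fp_iff lap_eq)
qed

lemma norm_op_eq: "norm_op p b (\<lambda>_. 0) x0 f = (NN f / 2 + \<bar>f x0\<bar> powr p) powr (1 / p)"
  by (simp add: norm_op_def energy_eq)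

lemma Fp_row: "Fp f \<Longrightarrow> (\<lambda>y. b x y * sgp p (f x - f y)) summable_on UNIV"
  unfolding Fp_def by (rule sum_cmp[of "\<lambda>y. b x y * \<bar>f x - f y\<bar> powr (p - 1)"])
    (auto simp: abs_mult abs_sgp bnn)

lemma Fp_bounded:
  assumes "\<And>x. \<bar>f x\<bar> \<le> M"
  shows "Fp f"
  unfolding Fp_def
proof
  fix x
  show "(\<lambda>y. b x y * \<bar>f x - f y\<bar> powr (p - 1)) summable_on UNIV"
  proof (rule sum_cmp[of "\<lambda>y. b x y * (2 * M) powr (p - 1)"])
    show "(\<lambda>y. b x y * (2 * M) powr (p - 1)) summable_on UNIV"
      using summable_on_cmult_left[OF bsum[of x]] by simp
    fix y
    have "\<bar>f x - f y\<bar> \<le> 2 * M" using assms[of x] assms[of y] by linarith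
    then have "\<bar>f x - f y\<bar> powr (p - 1) \<le> (2 * M) powr (p - 1)" using p1 by (intro powr_mono2) auto
    then show "\<bar>b x y * \<bar>f x - f y\<bar> powr (p - 1)\<bar> \<le> b x y * (2 * M) powr (p - 1)"
      using bnn[of x y] by (simp add: abs_mult mult_left_mono)
  qed
qed

lemma connected_const:
  assumes "\<And>x y. 0 < b x y \<Longrightarrow> f x = f y"
  shows "f x = f y"
proof -
  have "(x, y) \<in> {(u, v). 0 < b u v}\<^sup>*" by (rule conn)
  then show ?thesis
  proof (induction rule: rtrancl_induct)
    case (step y z)
    then show ?case using assms[of y z] by simp
  qed simp
qed

lemma green:
  assumes u: "Fp u" and S: "finite S" and psi: "\<And>x. x \<notin> S \<Longrightarrow> \<psi> x = 0"
  shows "(\<lambda>z. b (fst z) (snd z) * sgp p (u (fst z) - u (snd z)) * (\<psi> (fst z) - \<psi> (snd z))) summable_on UNIV"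
    and "infsum (\<lambda>z. b (fst z) (snd z) * sgp p (u (fst z) - u (snd z)) * (\<psi> (fst z) - \<psi> (snd z))) UNIV
           = 2 * (\<Sum>s\<in>S. \<psi> s * DL u s)"
proof -
  define r where "r s y = \<psi> s * (b s y * sgp p (u s - u y))" for s y
  have rs: "r s summable_on UNIV" for s
    unfolding r_def using Fp_row[OF u] by (rule summable_on_cmult_right)
  have ri: "infsum (r s) UNIV = \<psi> s * DL u s" for s
    unfolding r_def DL_def using Fp_row[OF u] by (rule infsum_cmult_right)
  define R1 where "R1 s z = (if fst z = s then r s (snd z) else 0)" for s z
  define R2 where "R2 s z = (if snd z = s then r s (fst z) else 0)" for s z
  have R1s: "R1 s summable_on UNIV" and R1i: "infsum (R1 s) UNIV = \<psi> s * DL u s" for s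
    unfolding R1_def using row_lemma[OF rs, of s] ri by auto
  have R2s: "R2 s summable_on UNIV" and R2i: "infsum (R2 s) UNIV = \<psi> s * DL u s" for s
    unfolding R2_def using col_lemma[OF rs, of s] ri by auto
  have A: "(\<lambda>z. \<Sum>s\<in>S. R1 s z) summable_on UNIV \<and> infsum (\<lambda>z. \<Sum>s\<in>S. R1 s z) UNIV = (\<Sum>s\<in>S. \<psi> s * DL u s)"
    using infsum_sum_fin[OF S, of R1 UNIV] R1s R1i by simp
  have B: "(\<lambda>z. \<Sum>s\<in>S. R2 s z) summable_on UNIV \<and> infsum (\<lambda>z. \<Sum>s\<in>S. R2 s z) UNIV = (\<Sum>s\<in>S. \<psi> s * DL u s)"
    using infsum_sum_fin[OF S, of R2 UNIV] R2s R2i by simp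
  have eq: "b (fst z) (snd z) * sgp p (u (fst z) - u (snd z)) * (\<psi> (fst z) - \<psi> (snd z))
      = (\<Sum>s\<in>S. R1 s z) + (\<Sum>s\<in>S. R2 s z)" for z
  proof -
    obtain x y where z: "z = (x, y)" by force
    have e1: "(\<Sum>s\<in>S. R1 s z) = b x y * sgp p (u x - u y) * \<psi> x"
    proof (cases "x \<in> S")
      case True
      have "(\<Sum>s\<in>S. R1 s z) = (\<Sum>s\<in>S. if s = x then R1 x z else 0)"
        by (rule sum.cong) (auto simp: R1_def z)
      then have "(\<Sum>s\<in>S. R1 s z) = R1 x z" using True S by simp
      then show ?thesis by (simp add: R1_def r_def z)
    next
      case False
      have "(\<Sum>s\<in>S. R1 s z) = 0" using False by (intro sum.neutral) (auto simp: R1_def z)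
      then show ?thesis using False psi[of x] by simp
    qed
    have e2: "(\<Sum>s\<in>S. R2 s z) = - (b x y * sgp p (u x - u y) * \<psi> y)"
    proof (cases "y \<in> S")
      case True
      have "(\<Sum>s\<in>S. R2 s z) = (\<Sum>s\<in>S. if s = y then R2 y z else 0)"
        by (rule sum.cong) (auto simp: R2_def z)
      then have "(\<Sum>s\<in>S. R2 s z) = R2 y z" using True S by simp
      then show ?thesis
        using sgp_neg[of p "u x - u y"] by (simp add: R2_def r_def z bsym[of y x])
    next
      case False
      have "(\<Sum>s\<in>S. R2 s z) = 0" using False by (intro sum.neutral) (auto simp: R2_def z)
      then show ?thesis using False psi[of y] by simp
    qed
    show ?thesis using e1 e2 z by (simp add: algebra_simps)
  qed
  show "(\<lambda>z. b (fst z) (snd z) * sgp p (u (fst z) - u (snd z)) * (\<psi> (fst z) - \<psi> (snd z))) summable_on UNIV"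
    unfolding eq using summable_on_add A B by blast
  show "infsum (\<lambda>z. b (fst z) (snd z) * sgp p (u (fst z) - u (snd z)) * (\<psi> (fst z) - \<psi> (snd z))) UNIV
           = 2 * (\<Sum>s\<in>S. \<psi> s * DL u s)"
    unfolding eq using infsum_add A B by (simp add: infsum_add)
qed

end


lemma pair_summ:
  fixes H :: "'a \<times> 'a \<Rightarrow> real"
  assumes S: "finite S" and H0: "\<And>z. fst z \<notin> S \<Longrightarrow> snd z \<notin> S \<Longrightarrow> H z = 0"
    and rows: "\<And>s. s \<in> S \<Longrightarrow> (\<lambda>y. H (s, y)) summable_on UNIV"
    and cols: "\<And>s. s \<in> S \<Longrightarrow> (\<lambda>x. H (x, s)) summable_on UNIV"
  shows "H summable_on UNIV"
proof -
  define r1 where "r1 s y = (if s \<in> S then H (s, y) else 0)" for s y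
  define r2 where "r2 s x = (if s \<in> S \<and> x \<notin> S then H (x, s) else 0)" for s x
  have r1s: "r1 s summable_on UNIV" for s unfolding r1_def using rows by (cases "s \<in> S") auto
  have r2s: "r2 s summable_on UNIV" for s
  proof (cases "s \<in> S")
    case True
    have "(\<lambda>x. norm (H (x, s))) summable_on UNIV"
      using summable_on_iff_abs_summable_on_real[THEN iffD1, OF cols[OF True]] .
    then have a: "(\<lambda>x. \<bar>H (x, s)\<bar>) summable_on UNIV" by simp
    show ?thesis by (rule sum_cmp[OF a]) (auto simp: r2_def)
  next
    case False
    then have "r2 s = (\<lambda>_. 0)" by (simp add: r2_def[abs_def])
    then show ?thesis by simp
  qed
  define R1 where "R1 s z = (if fst z = s then r1 s (snd z) else 0)" for s z
  define R2 where "R2 s z = (if snd z = s then r2 s (fst z) else 0)" for s z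
  have R1s: "R1 s summable_on UNIV" for s unfolding R1_def using row_lemma(1)[OF r1s[of s], of s] .
  have R2s: "R2 s summable_on UNIV" for s unfolding R2_def using col_lemma(1)[OF r2s[of s], of s] .
  have A: "(\<lambda>z. \<Sum>s\<in>S. R1 s z) summable_on UNIV" using infsum_sum_fin[OF S, of R1 UNIV] R1s by blast
  have B: "(\<lambda>z. \<Sum>s\<in>S. R2 s z) summable_on UNIV" using infsum_sum_fin[OF S, of R2 UNIV] R2s by blast
  have eq: "H z = (\<Sum>s\<in>S. R1 s z) + (\<Sum>s\<in>S. R2 s z)" for z
  proof -
    obtain x y where z: "z = (x, y)" by force
    have e1: "(\<Sum>s\<in>S. R1 s z) = (if x \<in> S then H z else 0)"
    proof -
      have "R1 s z = (if s = x then (if x \<in> S then H z else 0) else 0)" for s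
        unfolding R1_def r1_def z by simp
      then have "(\<Sum>s\<in>S. R1 s z) = (\<Sum>s\<in>S. if s = x then (if x \<in> S then H z else 0) else 0)"
        by simp
      also have "\<dots> = (if x \<in> S then H z else 0)" using S by (simp add: sum.delta)
      finally show ?thesis .
    qed
    have e2: "(\<Sum>s\<in>S. R2 s z) = (if y \<in> S \<and> x \<notin> S then H z else 0)"
    proof -
      have "R2 s z = (if s = y then (if y \<in> S \<and> x \<notin> S then H z else 0) else 0)" for s
        unfolding R2_def r2_def z by simp
      then have "(\<Sum>s\<in>S. R2 s z) = (\<Sum>s\<in>S. if s = y then (if y \<in> S \<and> x \<notin> S then H z else 0) else 0)"
        by simp
      also have "\<dots> = (if y \<in> S \<and> x \<notin> S then H z else 0)" using S by (simp add: sum.delta)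
      finally show ?thesis .
    qed
    show ?thesis
    proof (cases "x \<in> S")
      case True then show ?thesis using e1 e2 by simp
    next
      case False
      show ?thesis
      proof (cases "y \<in> S")
        case True then show ?thesis using e1 e2 False by simp
      next
        case F2: False
        have "H z = 0" using H0[of z] False F2 z by simp
        then show ?thesis using e1 e2 False F2 by simp
      qed
    qed
  qed
  show ?thesis unfolding eq[abs_def] using summable_on_add[OF A B] by simp
qed

context wgraph
begin

lemma finsupp_bound:
  assumes "fin_supp f"
  shows "\<exists>M. \<forall>x. \<bar>f x\<bar> \<le> M"
proof -
  define S where "S = {x. f x \<noteq> 0}"
  have S: "finite S" using assms by (simp add: fin_supp_def S_def)
  have "\<bar>f x\<bar> \<le> (\<Sum>s\<in>S. \<bar>f s\<bar>)" for x
  proof (cases "x \<in> S")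
    case True then show ?thesis using S by (intro member_le_sum) auto
  next
    case False then show ?thesis by (simp add: S_def sum_nonneg)
  qed
  then show ?thesis by blast
qed

lemma finsupp_Dp:
  assumes "fin_supp f"
  shows "Dp f"
proof -
  define S where "S = {x. f x \<noteq> 0}"
  have S: "finite S" using assms by (simp add: fin_supp_def S_def)
  obtain M where M: "\<And>x. \<bar>f x\<bar> \<le> M" using finsupp_bound[OF assms] by blast
  have bd: "\<bar>en f (x, y)\<bar> \<le> b x y * (2 * M) powr p" for x y
  proof -
    have "\<bar>f x - f y\<bar> \<le> 2 * M" using M[of x] M[of y] by linarith
    then have "\<bar>f x - f y\<bar> powr p \<le> (2 * M) powr p" using p1 by (intro powr_mono2) auto
    then show ?thesis using bnn[of x y] by (simp add: en_def abs_mult mult_left_mono)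
  qed
  show ?thesis unfolding Dp_def
  proof (rule pair_summ[OF S])
    fix z assume "fst z \<notin> S" "snd z \<notin> S"
    then show "en f z = 0" by (simp add: en_def S_def)
  next
    fix s
    show "(\<lambda>y. en f (s, y)) summable_on UNIV"
      by (rule sum_cmp[of "\<lambda>y. b s y * (2 * M) powr p"])
        (use summable_on_cmult_left[OF bsum[of s]] bd in auto)
    show "(\<lambda>x. en f (x, s)) summable_on UNIV"
      by (rule sum_cmp[of "\<lambda>x. b s x * (2 * M) powr p"])
        (use summable_on_cmult_left[OF bsum[of s]] bd bsym in auto)
  qed
qed

lemma en_diff_le: "en (\<lambda>x. f x - g x) z \<le> 2 powr (p - 1) * (en f z + en g z)"
proof -
  obtain x y where z: "z = (x, y)" by force
  have "\<bar>(f x - g x) - (f y - g y)\<bar> powr p \<le> 2 powr (p - 1) * (\<bar>f x - f y\<bar> powr p + \<bar>g x - g y\<bar> powr p)"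
    using abs_diff_powr[of p "f x - f y" "g x - g y"] p1 by (simp add: algebra_simps)
  then have le: "b x y * \<bar>(f x - g x) - (f y - g y)\<bar> powr p \<le> b x y * (2 powr (p - 1) * (\<bar>f x - f y\<bar> powr p + \<bar>g x - g y\<bar> powr p))"
    by (rule mult_left_mono[OF _ bnn])
  have a: "en (\<lambda>x. f x - g x) z = b x y * \<bar>(f x - g x) - (f y - g y)\<bar> powr p" by (simp add: en_def z)
  have c: "2 powr (p - 1) * (en f z + en g z) = b x y * (2 powr (p - 1) * (\<bar>f x - f y\<bar> powr p + \<bar>g x - g y\<bar> powr p))"
    by (simp add: en_def z algebra_simps)
  show ?thesis unfolding a c by (rule le)
qed

lemma Dp_diff:
  assumes "Dp f" "Dp g"
  shows "Dp (\<lambda>x. f x - g x)"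
  unfolding Dp_def
proof (rule sum_cmp[of "\<lambda>z. 2 powr (p - 1) * (en f z + en g z)"])
  show "(\<lambda>z. 2 powr (p - 1) * (en f z + en g z)) summable_on UNIV"
    using assms unfolding Dp_def by (intro summable_on_cmult_right summable_on_add)
  show "\<bar>en (\<lambda>x. f x - g x) z\<bar> \<le> 2 powr (p - 1) * (en f z + en g z)" for z
    using en_diff_le[of f g z] en_nonneg[of "\<lambda>x. f x - g x" z] by simp
qed

lemma en_uminus: "en (\<lambda>x. - f x) = en f"
  by (auto simp: en_def fun_eq_iff abs_minus_commute)

lemma en_add_const: "en (\<lambda>x. f x + c) = en f"
  by (auto simp: en_def fun_eq_iff)

lemma en_scale: "en (\<lambda>x. c * f x) z = \<bar>c\<bar> powr p * en f z"
proof -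
  have "\<bar>c * f (fst z) - c * f (snd z)\<bar> = \<bar>c\<bar> * \<bar>f (fst z) - f (snd z)\<bar>"
    by (simp add: abs_mult flip: right_diff_distrib)
  then show ?thesis by (simp add: en_def powr_mult)
qed

lemma DL_uminus: "DL (\<lambda>x. - f x) x = - DL f x"
proof -
  have "sgp p (- f x - - f y) = - sgp p (f x - f y)" for y
  proof -
    have "- f x - - f y = - (f x - f y)" by simp
    then show ?thesis by (simp only: sgp_neg)
  qed
  then have "(\<lambda>y. b x y * sgp p (- f x - - f y)) = (\<lambda>y. - (b x y * sgp p (f x - f y)))"
    by simp
  then show ?thesis unfolding DL_def by (simp add: infsum_uminus)
qed

lemma DL_add_const: "DL (\<lambda>x. f x + c) = DL f"
  by (auto simp: DL_def fun_eq_iff)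

lemma Fp_add_const: "Fp (\<lambda>x. f x + c) = Fp f"
  by (auto simp: Fp_def)

lemma lip_Dp:
  assumes "Dp f" "\<And>x y. \<bar>g x - g y\<bar> \<le> \<bar>f x - f y\<bar>"
  shows "Dp g" "NN g \<le> NN f"
proof -
  have le: "en g z \<le> en f z" for z
    using assms(2)[of "fst z" "snd z"] p1 bnn
    by (auto simp: en_def intro!: mult_left_mono powr_mono2)
  show "Dp g" unfolding Dp_def
    by (rule sum_cmp[of "en f"]) (use assms(1) le en_nonneg in \<open>auto simp: Dp_def\<close>)
  then show "NN g \<le> NN f" unfolding NN_def using assms(1) le
    by (intro infsum_mono) (auto simp: Dp_def)
qed

definition clamp :: "real \<Rightarrow> real" where "clamp a = min 1 (max 0 a)"

lemma clamp_lip: "\<bar>clamp a - clamp c\<bar> \<le> \<bar>a - c\<bar>"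
  by (auto simp: clamp_def)

lemma clamp_range: "0 \<le> clamp a" "clamp a \<le> 1"
  by (auto simp: clamp_def)

lemma par_test:
  assumes par: "p_parabolic p b (\<lambda>_. 0)" and K: "finite K" and e: "0 < e"
  shows "\<exists>\<phi>. fin_supp \<phi> \<and> (\<forall>x. 0 \<le> \<phi> x \<and> \<phi> x \<le> 1) \<and> (\<forall>x\<in>K. \<phi> x = 1) \<and> Dp \<phi> \<and> NN \<phi> < e"
proof -
  define A where "A = {\<phi>. fin_supp \<phi> \<and> (\<forall>x\<in>K. 1 \<le> \<phi> x)}"
  have "(\<lambda>x. if x \<in> K then 1 else 0 :: real) \<in> A"
    using K by (auto simp: A_def fin_supp_def)
  then have ne: "(\<lambda>\<phi>. energy p b (\<lambda>_. 0) \<phi>) ` A \<noteq> {}" by blast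
  have bb: "bdd_below ((\<lambda>\<phi>. energy p b (\<lambda>_. 0) \<phi>) ` A)"
    by (rule bdd_belowI[of _ 0]) (auto simp: energy_eq NN_nonneg)
  have "(INF \<phi>\<in>A. energy p b (\<lambda>_. 0) \<phi>) = 0" using par K by (simp add: p_parabolic_def A_def)
  then have "Inf ((\<lambda>\<phi>. energy p b (\<lambda>_. 0) \<phi>) ` A) < e / 2" using e by simp
  then obtain \<phi> where \<phi>: "\<phi> \<in> A" "energy p b (\<lambda>_. 0) \<phi> < e / 2"
    using cInf_less_iff[OF ne bb] by blast
  define \<psi> where "\<psi> x = clamp (\<phi> x)" for x
  have D\<phi>: "Dp \<phi>" using \<phi> finsupp_Dp by (auto simp: A_def)
  have l: "Dp \<psi>" "NN \<psi> \<le> NN \<phi>" using lip_Dp[OF D\<phi>, of \<psi>] clamp_lip by (auto simp: \<psi>_def)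
  have "fin_supp \<psi>"
  proof -
    have "{x. \<psi> x \<noteq> 0} \<subseteq> {x. \<phi> x \<noteq> 0}" by (auto simp: \<psi>_def clamp_def)
    then show ?thesis using \<phi> by (auto simp: A_def fin_supp_def intro: finite_subset)
  qed
  moreover have "\<forall>x. 0 \<le> \<psi> x \<and> \<psi> x \<le> 1" by (simp add: \<psi>_def clamp_range)
  moreover have "\<forall>x\<in>K. \<psi> x = 1" using \<phi> by (auto simp: A_def \<psi>_def clamp_def)
  moreover have "NN \<psi> < e" using l \<phi>(2) by (simp add: energy_eq)
  ultimately show ?thesis using l by blast
qed

lemma pert_eq:
  fixes x :: 'a and t :: real
  assumes M: "\<And>y. \<bar>f y\<bar> \<le> M" and Df: "Dp f"
  defines "g \<equiv> (\<lambda>y. f y + (if y = x then t else 0))"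
  defines "r \<equiv> (\<lambda>y. b x y * (\<bar>f x + t - f y\<bar> powr p - \<bar>f x - f y\<bar> powr p))"
  shows "r summable_on UNIV" "Dp g" "NN g = NN f + 2 * infsum r UNIV"
proof -
  have bd: "\<bar>r y\<bar> \<le> b x y * ((2 * M + \<bar>t\<bar>) powr p + (2 * M) powr p)" for y
  proof -
    have "\<bar>f x + t - f y\<bar> \<le> 2 * M + \<bar>t\<bar>" "\<bar>f x - f y\<bar> \<le> 2 * M" using M[of x] M[of y] by linarith+
    then have "\<bar>f x + t - f y\<bar> powr p \<le> (2 * M + \<bar>t\<bar>) powr p" "\<bar>f x - f y\<bar> powr p \<le> (2 * M) powr p"
      using p1 by (auto intro!: powr_mono2)
    then have "\<bar>\<bar>f x + t - f y\<bar> powr p - \<bar>f x - f y\<bar> powr p\<bar> \<le> (2 * M + \<bar>t\<bar>) powr p + (2 * M) powr p"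
      by (smt (verit) powr_ge_zero)
    then show ?thesis unfolding r_def using bnn[of x y] by (simp add: abs_mult mult_left_mono)
  qed
  show rs: "r summable_on UNIV"
    by (rule sum_cmp[OF _ bd]) (rule summable_on_cmult_left[OF bsum])
  define R1 where "R1 z = (if fst z = x then r (snd z) else 0)" for z
  define R2 where "R2 z = (if snd z = x then r (fst z) else 0)" for z
  have R1: "R1 summable_on UNIV" "infsum R1 UNIV = infsum r UNIV" unfolding R1_def using row_lemma[OF rs, of x] by auto
  have R2: "R2 summable_on UNIV" "infsum R2 UNIV = infsum r UNIV" unfolding R2_def using col_lemma[OF rs, of x] by auto
  have eq: "en g z = en f z + R1 z + R2 z" for z
  proof -
    obtain u v where z: "z = (u, v)" by force
    have rx: "r x = 0" by (simp add: r_def bdiag)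
    consider "u = x" "v = x" | "u = x" "v \<noteq> x" | "u \<noteq> x" "v = x" | "u \<noteq> x" "v \<noteq> x" by blast
    then show ?thesis
    proof cases
      case 1 then show ?thesis by (simp add: z en_def R1_def R2_def rx bdiag)
    next
      case 2 then show ?thesis by (simp add: z en_def R1_def R2_def r_def g_def algebra_simps)
    next
      case 3
      have "\<bar>f u - (f x + t)\<bar> = \<bar>f x + t - f u\<bar>" by (simp add: abs_minus_commute)
      moreover have "\<bar>f x - f u\<bar> = \<bar>f u - f x\<bar>" by (rule abs_minus_commute)
      ultimately show ?thesis using 3 by (simp add: z en_def R1_def R2_def r_def g_def bsym[of u x] algebra_simps)
    next
      case 4 then show ?thesis by (simp add: z en_def R1_def R2_def g_def)
    qed
  qed
  have s1: "(\<lambda>z. en f z + R1 z) summable_on UNIV" using Df R1 by (intro summable_on_add) (auto simp: Dp_def)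
  show "Dp g" unfolding Dp_def eq[abs_def] using summable_on_add[OF s1 R2(1)] by simp
  have "NN g = infsum (\<lambda>z. en f z + R1 z) UNIV + infsum R2 UNIV"
    unfolding NN_def eq[abs_def] by (rule infsum_add[OF s1 R2(1)])
  also have "infsum (\<lambda>z. en f z + R1 z) UNIV = NN f + infsum R1 UNIV"
    unfolding NN_def using Df R1 by (intro infsum_add) (auto simp: Dp_def)
  finally show "NN g = NN f + 2 * infsum r UNIV" using R1 R2 by simp
qed

lemma pert_min:
  assumes M: "\<And>y. \<bar>f y\<bar> \<le> M" and Df: "Dp f"
    and min: "\<And>t. 0 < t \<Longrightarrow> t \<le> 1 \<Longrightarrow> NN f \<le> NN (\<lambda>y. f y + (if y = x then t else 0))"
  shows "0 \<le> DL f x"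
proof -
  define S where "S t = infsum (\<lambda>y. b x y * sgp p (f x - f y + t)) UNIV" for t
  have Sn: "0 \<le> S t" if t: "0 < t" "t \<le> 1" for t
  proof -
    define r where "r = (\<lambda>y. b x y * (\<bar>f x + t - f y\<bar> powr p - \<bar>f x - f y\<bar> powr p))"
    have pe: "r summable_on UNIV" "NN (\<lambda>y. f y + (if y = x then t else 0)) = NN f + 2 * infsum r UNIV"
      using pert_eq[OF M Df, of x t] by (auto simp: r_def)
    have "0 \<le> infsum r UNIV" using min[OF t] pe by simp
    have bd: "\<bar>b x y * sgp p (f x - f y + t)\<bar> \<le> b x y * (2 * M + 1) powr (p - 1)" for y
    proof -
      have "\<bar>f x - f y + t\<bar> \<le> 2 * M + 1" using M[of x] M[of y] t by linarith
      then have "\<bar>f x - f y + t\<bar> powr (p - 1) \<le> (2 * M + 1) powr (p - 1)" using p1 by (intro powr_mono2) auto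
      then show ?thesis using bnn[of x y] by (simp add: abs_mult abs_sgp mult_left_mono)
    qed
    have ss: "(\<lambda>y. b x y * sgp p (f x - f y + t)) summable_on UNIV"
      by (rule sum_cmp[OF _ bd]) (rule summable_on_cmult_left[OF bsum])
    have "r y \<le> (p * t) * (b x y * sgp p (f x - f y + t))" for y
    proof -
      have "\<bar>f x - f y + t\<bar> powr p + p * sgp p (f x - f y + t) * ((f x - f y) - (f x - f y + t)) \<le> \<bar>f x - f y\<bar> powr p"
        by (rule tangent_abs_powr[OF p1])
      then have "\<bar>f x + t - f y\<bar> powr p - \<bar>f x - f y\<bar> powr p \<le> p * t * sgp p (f x - f y + t)"
        by (simp add: algebra_simps)
      then have "b x y * (\<bar>f x + t - f y\<bar> powr p - \<bar>f x - f y\<bar> powr p) \<le> b x y * (p * t * sgp p (f x - f y + t))"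
        by (rule mult_left_mono[OF _ bnn])
      then show ?thesis unfolding r_def by (simp add: mult_ac)
    qed
    then have "infsum r UNIV \<le> infsum (\<lambda>y. (p * t) * (b x y * sgp p (f x - f y + t))) UNIV"
      using pe(1) summable_on_cmult_right[OF ss] by (intro infsum_mono) auto
    also have "\<dots> = (p * t) * S t" unfolding S_def by (rule infsum_cmult_right[OF ss])
    finally have "0 \<le> (p * t) * S t" using \<open>0 \<le> infsum r UNIV\<close> by linarith
    moreover have "0 < p * t" using p1 t by simp
    ultimately show ?thesis by (simp add: zero_le_mult_iff)
  qed
  define t where "t n = inverse (real (Suc n))" for n
  have t: "0 < t n" "t n \<le> 1" for n by (auto simp: t_def field_simps)
  have t0: "t \<longlonglongrightarrow> 0" unfolding t_def by (rule LIMSEQ_inverse_real_of_nat)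
  have "(\<lambda>n. S (t n)) \<longlonglongrightarrow> DL f x"
    unfolding S_def DL_def
  proof (rule dct_infsum)
    show "(\<lambda>y. b x y * (2 * M + 1) powr (p - 1)) summable_on UNIV"
      by (rule summable_on_cmult_left[OF bsum])
    show "\<bar>b x y * sgp p (f x - f y + t n)\<bar> \<le> b x y * (2 * M + 1) powr (p - 1)" for n y
    proof -
      have "\<bar>f x - f y + t n\<bar> \<le> 2 * M + 1" using M[of x] M[of y] t[of n] by linarith
      then have "\<bar>f x - f y + t n\<bar> powr (p - 1) \<le> (2 * M + 1) powr (p - 1)" using p1 by (intro powr_mono2) auto
      then show ?thesis using bnn[of x y] by (simp add: abs_mult abs_sgp mult_left_mono)
    qed
    show "(\<lambda>n. b x y * sgp p (f x - f y + t n)) \<longlonglongrightarrow> b x y * sgp p (f x - f y)" for y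
      using sgp_tendsto[OF p1 tendsto_add[OF tendsto_const t0, of "f x - f y"]] by (intro tendsto_mult_left) simp
  qed
  then show ?thesis using Sn t by (intro LIMSEQ_le_const) auto
qed

end


lemma sgp_inv_neg:
  assumes p: "1 < p" and s: "0 < s" and t: "0 < t" and st: "s \<noteq> t"
  shows "sgp p (s - t) * (1 / s powr (p - 1) - 1 / t powr (p - 1)) < 0"
proof (cases "s < t")
  case True
  have "s powr (p - 1) < t powr (p - 1)" using True p s by (intro powr_less_mono2) auto
  moreover have "0 < t powr (p - 1) * s powr (p - 1)" using s t by simp
  ultimately have "1 / t powr (p - 1) < 1 / s powr (p - 1)" by (intro divide_strict_left_mono) auto
  moreover have "sgp p (s - t) < 0" using True sgp_nonneg_iff[of p "s - t"] by (simp add: not_le[symmetric])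
  ultimately show ?thesis by (intro mult_neg_pos) auto
next
  case False
  then have ts: "t < s" using st by simp
  have "t powr (p - 1) < s powr (p - 1)" using ts p t by (intro powr_less_mono2) auto
  moreover have "0 < s powr (p - 1) * t powr (p - 1)" using s t by simp
  ultimately have "1 / s powr (p - 1) < 1 / t powr (p - 1)" by (intro divide_strict_left_mono) auto
  moreover have "0 < sgp p (s - t)" using ts sgp_pos_iff[of p "s - t"] by simp
  ultimately show ?thesis by (intro mult_pos_neg) auto
qed

context wgraph
begin

lemma par_liouville:
  assumes par: "p_parabolic p b (\<lambda>_. 0)" and Fu: "Fp u" and Du: "\<And>x. 0 \<le> DL u x"
    and L: "\<And>x. L \<le> u x"
  shows "is_constant u"
proof -
  define v where "v x = u x + (1 - L)" for x
  have Fv: "Fp v" using Fu Fp_add_const[of u "1 - L"] by (simp add: v_def[abs_def])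
  have Dv: "DL v x = DL u x" for x using DL_add_const[of u "1 - L"] by (simp add: v_def[abs_def])
  have vpos: "0 < v x" for x using L[of x] by (simp add: v_def)
  have edge: "v x1 = v y1" if bxy: "0 < b x1 y1" for x1 y1
  proof (rule ccontr)
    assume ne: "v x1 \<noteq> v y1"
    define q where "q = p - 1"
    define \<kappa> where "\<kappa> = b x1 y1 * (- (sgp p (v x1 - v y1) * (1 / v x1 powr q - 1 / v y1 powr q)))"
    have \<kappa>: "0 < \<kappa>" unfolding \<kappa>_def q_def
      using sgp_inv_neg[OF p1 vpos vpos ne] bxy by (intro mult_pos_pos) auto
    obtain \<phi> where \<phi>: "fin_supp \<phi>" "\<And>x. 0 \<le> \<phi> x \<and> \<phi> x \<le> 1" "\<forall>x\<in>{x1, y1}. \<phi> x = 1" "Dp \<phi>" "NN \<phi> < \<kappa>"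
      using par_test[OF par _ \<kappa>, of "{x1, y1}"] by auto
    define S where "S = {x. \<phi> x \<noteq> 0}"
    have S: "finite S" using \<phi>(1) by (simp add: fin_supp_def S_def)
    define \<psi> where "\<psi> x = \<phi> x powr p / v x powr q" for x
    have \<psi>0: "\<psi> x = 0" if "x \<notin> S" for x using that by (simp add: \<psi>_def S_def)
    define G where "G z = b (fst z) (snd z) * sgp p (v (fst z) - v (snd z)) * (\<psi> (fst z) - \<psi> (snd z))" for z
    have Gs: "G summable_on UNIV" unfolding G_def using green(1)[OF Fv S \<psi>0] .
    have Gi: "infsum G UNIV = 2 * (\<Sum>s\<in>S. \<psi> s * DL v s)" unfolding G_def using green(2)[OF Fv S \<psi>0] .
    have Gnn: "0 \<le> infsum G UNIV" unfolding Gi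
      using Du \<phi>(2) by (auto intro!: sum_nonneg mult_nonneg_nonneg simp: \<psi>_def Dv)
    define T where "T z = en \<phi> z - G z" for z
    have Tnn: "0 \<le> T z" for z
    proof -
      obtain x y where z: "z = (x, y)" by force
      have "sgp p (v x - v y) * (\<phi> x powr p / v x powr (p - 1) - \<phi> y powr p / v y powr (p - 1))
             \<le> \<bar>\<phi> x - \<phi> y\<bar> powr p"
        using picone[OF p1 vpos[of x] vpos[of y], of "\<phi> x" "\<phi> y"] \<phi>(2) by auto
      then have "b x y * (sgp p (v x - v y) * (\<psi> x - \<psi> y)) \<le> b x y * \<bar>\<phi> x - \<phi> y\<bar> powr p"
        unfolding \<psi>_def q_def by (rule mult_left_mono[OF _ bnn])
      then show ?thesis by (simp add: T_def en_def G_def z mult.assoc)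
    qed
    have Ts: "T summable_on UNIV" unfolding T_def using \<phi>(4) Gs by (intro summable_on_diff) (auto simp: Dp_def)
    have "infsum T UNIV = NN \<phi> - infsum G UNIV" unfolding T_def NN_def
      using \<phi>(4) Gs by (intro infsum_diff) (auto simp: Dp_def)
    then have Tle: "infsum T UNIV < \<kappa>" using Gnn \<phi>(5) by linarith
    have "T (x1, y1) = \<kappa>"
      using \<phi>(3) by (simp add: T_def en_def G_def \<psi>_def \<kappa>_def q_def algebra_simps)
    moreover have "T (x1, y1) \<le> infsum T UNIV" by (rule le_infsum_single[OF Ts]) (auto simp: Tnn)
    ultimately show False using Tle by simp
  qed
  have "v x = v y" for x y by (rule connected_const) (use edge in blast)
  then have "u x = u y" for x y by (simp add: v_def)
  then show ?thesis unfolding is_constant_def by blast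
qed

end


context wgraph
begin

lemma par_Dp:
  assumes par: "p_parabolic p b (\<lambda>_. 0)" and Fu: "Fp u" and Du: "\<And>x. 0 \<le> DL u x"
    and Dpu: "Dp u"
  shows "is_constant u"
proof -
  have edge: "u x1 = u y1" if bxy: "0 < b x1 y1" for x1 y1
  proof (rule ccontr)
    assume ne: "u x1 \<noteq> u y1"
    define lo where "lo = min (u x1) (u y1)"
    define hi where "hi = max (u x1) (u y1)"
    define M where "M = hi - lo"
    have M: "0 < M" using ne by (auto simp: M_def lo_def hi_def)
    define T where "T a = max 0 (min M (hi - a))" for a
    have T0: "0 \<le> T a" "T a \<le> M" for a using M by (auto simp: T_def)
    have Tanti: "T c \<le> T a" if "a \<le> c" for a c using that by (auto simp: T_def)
    have Tv: "T (u x1) - T (u y1) = u y1 - u x1"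
    proof -
      have "T (u x1) = hi - u x1" "T (u y1) = hi - u y1"
        by (auto simp: T_def M_def lo_def hi_def)
      then show ?thesis by simp
    qed
    define \<kappa> where "\<kappa> = b x1 y1 * \<bar>u x1 - u y1\<bar> powr p"
    have \<kappa>: "0 < \<kappa>" using bxy ne by (simp add: \<kappa>_def)
    have NNu: "0 \<le> NN u" by (rule NN_nonneg)
    define \<delta> where "\<delta> = \<kappa> / (2 * M * (NN u + 1))"
    have \<delta>: "0 < \<delta>" using \<kappa> M NNu by (simp add: \<delta>_def)
    define C where "C = 1 / \<delta> powr (p - 1)"
    have C: "0 < C" using \<delta> by (simp add: C_def)
    have e: "0 < \<kappa> / (2 * M * C)" using \<kappa> M C by simp
    obtain \<phi> where \<phi>: "fin_supp \<phi>" "\<And>x. 0 \<le> \<phi> x \<and> \<phi> x \<le> 1" "\<forall>x\<in>{x1}. \<phi> x = 1" "Dp \<phi>"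
        "NN \<phi> < \<kappa> / (2 * M * C)"
      using par_test[OF par _ e, of "{x1}"] by auto
    define S where "S = {x. \<phi> x \<noteq> 0}"
    have S: "finite S" using \<phi>(1) by (simp add: fin_supp_def S_def)
    define \<psi> where "\<psi> x = \<phi> x * T (u x)" for x
    have \<psi>0: "\<psi> x = 0" if "x \<notin> S" for x using that by (simp add: \<psi>_def S_def)
    define G where "G z = b (fst z) (snd z) * sgp p (u (fst z) - u (snd z)) * (\<psi> (fst z) - \<psi> (snd z))" for z
    have Gs: "G summable_on UNIV" unfolding G_def using green(1)[OF Fu S \<psi>0] .
    have Gi: "infsum G UNIV = 2 * (\<Sum>s\<in>S. \<psi> s * DL u s)" unfolding G_def using green(2)[OF Fu S \<psi>0] .
    have Gnn: "0 \<le> infsum G UNIV" unfolding Gi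
      using Du \<phi>(2) T0 by (auto intro!: sum_nonneg mult_nonneg_nonneg simp: \<psi>_def)
    define B where "B z = b (fst z) (snd z) * sgp p (u (fst z) - u (snd z)) * (T (u (snd z)) * (\<phi> (fst z) - \<phi> (snd z)))" for z
    define NA where "NA z = b (fst z) (snd z) * sgp p (u (fst z) - u (snd z)) * (\<phi> (fst z) * (T (u (snd z)) - T (u (fst z))))" for z
    have NAeq: "NA z = B z - G z" for z by (simp add: NA_def B_def G_def \<psi>_def algebra_simps)
    have NAnn: "0 \<le> NA z" for z
    proof -
      obtain x y where z: "z = (x, y)" by force
      have "0 \<le> sgp p (u x - u y) * (T (u y) - T (u x))"
      proof (cases "u y \<le> u x")
        case True
        then show ?thesis using Tanti[OF True] sgp_nonneg_iff[of p "u x - u y"] by (intro mult_nonneg_nonneg) auto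
      next
        case False
        then have "u x \<le> u y" by simp
        then show ?thesis using Tanti[of "u x" "u y"] sgp_nonneg_iff[of p "u x - u y"] False
          by (intro mult_nonpos_nonpos) auto
      qed
      then have "0 \<le> \<phi> x * (sgp p (u x - u y) * (T (u y) - T (u x)))" using \<phi>(2)[of x] by simp
      then have "0 \<le> b x y * (\<phi> x * (sgp p (u x - u y) * (T (u y) - T (u x))))" using bnn[of x y] by simp
      then show ?thesis by (simp add: NA_def z mult_ac)
    qed
    have Bbd: "\<bar>B z\<bar> \<le> M * (\<delta> * en u z + C * en \<phi> z)" for z
    proof -
      obtain x y where z: "z = (x, y)" by force
      have y1: "\<bar>u x - u y\<bar> powr (p - 1) * \<bar>\<phi> x - \<phi> y\<bar> \<le> \<delta> * \<bar>u x - u y\<bar> powr p + C * \<bar>\<phi> x - \<phi> y\<bar> powr p"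
        using young_eps[OF p1 \<delta>, of "\<bar>u x - u y\<bar>" "\<bar>\<phi> x - \<phi> y\<bar>"] by (simp add: C_def)
      have "\<bar>B z\<bar> = b x y * (\<bar>u x - u y\<bar> powr (p - 1) * \<bar>\<phi> x - \<phi> y\<bar>) * T (u y)"
        using bnn[of x y] T0[of "u y"] by (simp add: B_def z abs_mult abs_sgp mult_ac)
      also have "\<dots> \<le> b x y * (\<bar>u x - u y\<bar> powr (p - 1) * \<bar>\<phi> x - \<phi> y\<bar>) * M"
        using bnn[of x y] T0[of "u y"] by (intro mult_left_mono) auto
      also have "\<dots> \<le> b x y * (\<delta> * \<bar>u x - u y\<bar> powr p + C * \<bar>\<phi> x - \<phi> y\<bar> powr p) * M"
        using bnn[of x y] M y1 by (intro mult_right_mono mult_left_mono) auto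
      also have "\<dots> = M * (\<delta> * en u z + C * en \<phi> z)" by (simp add: en_def z algebra_simps)
      finally show ?thesis .
    qed
    have bs: "(\<lambda>z. M * (\<delta> * en u z + C * en \<phi> z)) summable_on UNIV"
      using Dpu \<phi>(4) unfolding Dp_def
      by (intro summable_on_cmult_right summable_on_add) auto
    have Bs: "B summable_on UNIV" by (rule sum_cmp[OF bs Bbd])
    have "infsum B UNIV \<le> infsum (\<lambda>z. M * (\<delta> * en u z + C * en \<phi> z)) UNIV"
      using Bs bs Bbd by (intro infsum_mono) (auto simp: abs_le_iff)
    also have "\<dots> = M * (\<delta> * NN u + C * NN \<phi>)"
    proof -
      have s1: "(\<lambda>z. \<delta> * en u z) summable_on UNIV" "(\<lambda>z. C * en \<phi> z) summable_on UNIV"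
        using Dpu \<phi>(4) unfolding Dp_def by (auto intro: summable_on_cmult_right)
      show ?thesis
        using infsum_cmult_right[OF summable_on_add[OF s1]] infsum_add[OF s1]
          infsum_cmult_right[where f="en u" and A=UNIV and c=\<delta>] infsum_cmult_right[where f="en \<phi>" and A=UNIV and c=C] Dpu \<phi>(4)
        by (simp add: NN_def Dp_def)
    qed
    finally have Bi: "infsum B UNIV \<le> M * (\<delta> * NN u + C * NN \<phi>)" .
    have NAs: "NA summable_on UNIV" unfolding NAeq[abs_def] using Bs Gs by (rule summable_on_diff)
    have NAi: "infsum NA UNIV = infsum B UNIV - infsum G UNIV" unfolding NAeq[abs_def] using Bs Gs by (rule infsum_diff)
    have "NA (x1, y1) = \<kappa>"
    proof -
      have "NA (x1, y1) = b x1 y1 * (sgp p (u x1 - u y1) * (u x1 - u y1))"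
        using \<phi>(3) Tv by (simp add: NA_def)
      then show ?thesis by (simp add: sgp_mult_self \<kappa>_def)
    qed
    moreover have "NA (x1, y1) \<le> infsum NA UNIV" by (rule le_infsum_single[OF NAs]) (auto simp: NAnn)
    ultimately have k1: "\<kappa> \<le> M * (\<delta> * NN u + C * NN \<phi>)" using NAi Gnn Bi by linarith
    have k2: "M * \<delta> * NN u < \<kappa> / 2"
    proof -
      have d: "NN u + 1 \<noteq> 0" "M \<noteq> 0" using NNu M by auto
      have D: "M * (NN u + 1) \<noteq> 0" using d by simp
      have "M * \<delta> * (NN u + 1) = (M * (NN u + 1)) * (\<kappa> / (2 * (M * (NN u + 1))))"
        by (simp add: \<delta>_def mult_ac)
      also have "\<dots> = \<kappa> / 2" using D by simp
      finally have h1: "M * \<delta> * (NN u + 1) = \<kappa> / 2" .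
      have "M * \<delta> * NN u < M * \<delta> * (NN u + 1)" using M \<delta> by simp
      then show ?thesis using h1 by simp
    qed
    have k3: "M * C * NN \<phi> < \<kappa> / 2"
    proof -
      have "M * C * NN \<phi> < M * C * (\<kappa> / (2 * M * C))" using M C \<phi>(5) by (intro mult_strict_left_mono) auto
      also have "\<dots> = \<kappa> / 2" using M C by (simp add: field_simps)
      finally show ?thesis .
    qed
    show False using k1 k2 k3 by (simp add: algebra_simps)
  qed
  have "u x = u y" for x y by (rule connected_const) (use edge in blast)
  then show ?thesis unfolding is_constant_def by blast
qed

end


lemma powr_lt_iff:
  fixes x y r :: real
  assumes "0 < r" "0 \<le> x" "0 \<le> y"
  shows "x powr r < y powr r \<longleftrightarrow> x < y"
proof
  assume h: "x powr r < y powr r"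
  show "x < y"
  proof (rule ccontr)
    assume "\<not> x < y"
    then have "y powr r \<le> x powr r" using assms by (intro powr_mono2) auto
    then show False using h by simp
  qed
qed (use assms in \<open>auto intro: powr_less_mono2\<close>)

lemma root_lt_iff:
  fixes a e p :: real
  assumes "1 < p" "0 \<le> a" "0 < e"
  shows "a powr (1 / p) < e \<longleftrightarrow> a < e powr p"
proof -
  have "a powr (1 / p) < e \<longleftrightarrow> (a powr (1 / p)) powr p < e powr p"
    using assms by (intro powr_lt_iff[symmetric]) auto
  also have "(a powr (1 / p)) powr p = a" using assms by (simp add: powr_powr powr_one)
  finally show ?thesis .
qed

context wgraph
begin

lemma normop_lt:
  assumes "0 < e"
  shows "norm_op p b (\<lambda>_. 0) x0 g < e \<longleftrightarrow> NN g / 2 + \<bar>g x0\<bar> powr p < e powr p"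
  unfolding norm_op_eq using root_lt_iff[OF p1 _ assms, of "NN g / 2 + \<bar>g x0\<bar> powr p"] NN_nonneg[of g]
  by simp

lemma en_one_minus: "en (\<lambda>x. c - f x) = en f"
  by (auto simp: en_def fun_eq_iff abs_minus_commute)

lemma NN_scale: "NN (\<lambda>x. c * f x) = \<bar>c\<bar> powr p * NN f"
  unfolding NN_def en_scale by (rule infsum_cmult_right') 

lemma one_D0:
  assumes par: "p_parabolic p b (\<lambda>_. 0)"
  shows "in_D0p p b (\<lambda>_. 0) x0 (\<lambda>_. 1)"
  unfolding in_D0p_def
proof (intro conjI allI impI)
  have "en (\<lambda>_. 1) = (\<lambda>_. 0)" by (auto simp: en_def fun_eq_iff)
  then show "in_Dp p b (\<lambda>_. 0) (\<lambda>_. 1)" by (simp add: in_Dp_iff Dp_def)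
  fix e :: real assume e: "0 < e"
  obtain \<phi> where \<phi>: "fin_supp \<phi>" "\<forall>x\<in>{x0}. \<phi> x = 1" "NN \<phi> < e powr p"
    using par_test[OF par _ powr_gt_zero[THEN iffD2], of "{x0}" e] e by auto
  have "NN (\<lambda>x. 1 - \<phi> x) = NN \<phi>" by (simp add: NN_def en_one_minus)
  then have "NN (\<lambda>x. 1 - \<phi> x) / 2 + \<bar>1 - \<phi> x0\<bar> powr p < e powr p"
    using \<phi> NN_nonneg[of \<phi>] by simp
  then show "\<exists>\<phi>. fin_supp \<phi> \<and> norm_op p b (\<lambda>_. 0) x0 (\<lambda>x. 1 - \<phi> x) < e"
    using \<phi>(1) normop_lt[OF e] by blast
qed

lemma harm_D0_NN:
  assumes Fh: "Fp h" and Dh: "\<And>x. DL h x = 0" and D0: "in_D0p p b (\<lambda>_. 0) x0 h"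
  shows "NN h = 0"
proof -
  have Dph: "Dp h" using D0 by (simp add: in_D0p_def in_Dp_iff)
  define C where "C = 1 / (1/2) powr (p - 1)"
  have C: "0 < C" by (simp add: C_def)
  have key: "NN h \<le> 2 * C * NN (\<lambda>x. h x - \<phi> x)" if \<phi>: "fin_supp \<phi>" for \<phi>
  proof -
    define S where "S = {x. \<phi> x \<noteq> 0}"
    have S: "finite S" using \<phi> by (simp add: fin_supp_def S_def)
    have \<phi>0: "\<phi> x = 0" if "x \<notin> S" for x using that by (simp add: S_def)
    define G where "G z = b (fst z) (snd z) * sgp p (h (fst z) - h (snd z)) * (\<phi> (fst z) - \<phi> (snd z))" for z
    have Gs: "G summable_on UNIV" unfolding G_def using green(1)[OF Fh S \<phi>0] .
    have Gi: "infsum G UNIV = 0" unfolding G_def using green(2)[OF Fh S \<phi>0] by (simp add: Dh)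
    have Dd: "Dp (\<lambda>x. h x - \<phi> x)" using Dp_diff[OF Dph finsupp_Dp[OF \<phi>]] .
    define W where "W z = en h z - G z" for z
    have Ws: "W summable_on UNIV" unfolding W_def using Dph Gs by (intro summable_on_diff) (auto simp: Dp_def)
    have "infsum W UNIV = infsum (en h) UNIV - infsum G UNIV" unfolding W_def
      by (rule infsum_diff) (use Dph Gs in \<open>auto simp: Dp_def\<close>)
    then have Wi: "infsum W UNIV = NN h" using Gi by (simp add: NN_def)
    have Wle: "W z \<le> (1/2) * en h z + C * en (\<lambda>x. h x - \<phi> x) z" for z
    proof -
      obtain x y where z: "z = (x, y)" by force
      have "W z = b x y * (sgp p (h x - h y) * ((h x - \<phi> x) - (h y - \<phi> y)))"
        by (simp add: W_def en_def G_def z sgp_mult_self[symmetric] algebra_simps)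
      also have "\<dots> \<le> b x y * (\<bar>h x - h y\<bar> powr (p - 1) * \<bar>(h x - \<phi> x) - (h y - \<phi> y)\<bar>)"
        using bnn[of x y]
        by (intro mult_left_mono) (auto simp: abs_sgp[symmetric] abs_mult[symmetric] intro: abs_ge_self)
      also have "\<dots> \<le> b x y * ((1/2) * \<bar>h x - h y\<bar> powr p + C * \<bar>(h x - \<phi> x) - (h y - \<phi> y)\<bar> powr p)"
        using bnn[of x y] young_eps[OF p1, of "1/2" "\<bar>h x - h y\<bar>" "\<bar>(h x - \<phi> x) - (h y - \<phi> y)\<bar>"]
        by (intro mult_left_mono) (auto simp: C_def)
      also have "\<dots> = (1/2) * en h z + C * en (\<lambda>x. h x - \<phi> x) z" by (simp add: en_def z algebra_simps)
      finally show ?thesis .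
    qed
    have s1: "(\<lambda>z. (1/2) * en h z) summable_on UNIV" "(\<lambda>z. C * en (\<lambda>x. h x - \<phi> x) z) summable_on UNIV"
      by (rule summable_on_cmult_right, use Dph Dd in \<open>simp add: Dp_def\<close>)+
    have "NN h \<le> infsum (\<lambda>z. (1/2) * en h z + C * en (\<lambda>x. h x - \<phi> x) z) UNIV"
      unfolding Wi[symmetric] by (rule infsum_mono[OF Ws summable_on_add[OF s1]]) (rule Wle)
    also have "\<dots> = (1/2) * NN h + C * NN (\<lambda>x. h x - \<phi> x)"
    proof -
      have a: "infsum (\<lambda>z. (1/2) * en h z) UNIV = (1/2) * NN h" unfolding NN_def by (rule infsum_cmult_right')
      have c: "infsum (\<lambda>z. C * en (\<lambda>x. h x - \<phi> x) z) UNIV = C * NN (\<lambda>x. h x - \<phi> x)"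
        unfolding NN_def by (rule infsum_cmult_right')
      show ?thesis using infsum_add[OF s1] unfolding a c .
    qed
    finally show ?thesis by simp
  qed
  have small: "NN h \<le> \<eta>" if \<eta>: "0 < \<eta>" for \<eta>
  proof -
    define e where "e = (\<eta> / (4 * C)) powr (1 / p)"
    have e: "0 < e" using \<eta> C by (simp add: e_def)
    have ep: "e powr p = \<eta> / (4 * C)" using \<eta> C p1 by (simp add: e_def powr_powr)
    obtain \<phi> where \<phi>: "fin_supp \<phi>" "norm_op p b (\<lambda>_. 0) x0 (\<lambda>x. h x - \<phi> x) < e"
      using D0 e unfolding in_D0p_def by blast
    have "NN (\<lambda>x. h x - \<phi> x) / 2 + \<bar>h x0 - \<phi> x0\<bar> powr p < e powr p" using \<phi>(2) normop_lt[OF e] by simp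
    moreover have "0 \<le> \<bar>h x0 - \<phi> x0\<bar> powr p" by simp
    ultimately have "NN (\<lambda>x. h x - \<phi> x) < 2 * (\<eta> / (4 * C))" using ep by linarith
    then have "2 * C * NN (\<lambda>x. h x - \<phi> x) < 2 * C * (2 * (\<eta> / (4 * C)))" using C by (intro mult_strict_left_mono) auto
    also have "\<dots> = \<eta>" using C by (simp add: field_simps)
    finally show ?thesis using key[OF \<phi>(1)] by simp
  qed
  have "NN h \<le> 0"
  proof (rule ccontr)
    assume "\<not> NN h \<le> 0"
    then have "0 < NN h / 2" by simp
    from small[OF this] show False using \<open>\<not> NN h \<le> 0\<close> by simp
  qed
  then show ?thesis using NN_nonneg[of h] by simp
qed

lemma NN_zero_const:
  assumes "Dp h" "NN h = 0"
  shows "h x = h y"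
proof (rule connected_const)
  fix x y assume bxy: "0 < b x y"
  have "en h (x, y) = 0" using nonneg_infsum_le_0D[of "en h" UNIV "(x, y)"] assms en_nonneg
    by (auto simp: NN_def Dp_def)
  then show "h x = h y" using bxy by (simp add: en_def)
qed

lemma path_lemma:
  shows "\<forall>e>0. \<exists>\<delta>>0. \<forall>g. Dp g \<longrightarrow> NN g < \<delta> \<longrightarrow> \<bar>g x0\<bar> < \<delta> \<longrightarrow> \<bar>g x\<bar> < e"
proof -
  have "(x0, x) \<in> {(u, v). 0 < b u v}\<^sup>*" by (rule conn)
  then show ?thesis
  proof (induction rule: rtrancl_induct)
    case base
    then show ?case by blast
  next
    case (step y z)
    have byz: "0 < b y z" using step(2) by simp
    show ?case
    proof (intro allI impI)
      fix e :: real assume e: "0 < e"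
      obtain \<delta>1 where \<delta>1: "0 < \<delta>1" "\<And>g. Dp g \<Longrightarrow> NN g < \<delta>1 \<Longrightarrow> \<bar>g x0\<bar> < \<delta>1 \<Longrightarrow> \<bar>g y\<bar> < e / 2"
        using step(3) e by (meson half_gt_zero)
      define \<delta> where "\<delta> = min \<delta>1 (b y z * (e / 2) powr p)"
      have \<delta>: "0 < \<delta>" using \<delta>1 byz e by (simp add: \<delta>_def)
      have "\<bar>g z\<bar> < e" if g: "Dp g" "NN g < \<delta>" "\<bar>g x0\<bar> < \<delta>" for g
      proof -
        have gy: "\<bar>g y\<bar> < e / 2" using \<delta>1(2)[OF g(1)] g by (simp add: \<delta>_def)
        have "en g (y, z) \<le> NN g" unfolding NN_def
          by (rule le_infsum_single) (use g(1) en_nonneg in \<open>auto simp: Dp_def\<close>)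
        then have "b y z * \<bar>g y - g z\<bar> powr p < b y z * (e / 2) powr p" using g(2) by (simp add: en_def \<delta>_def)
        then have "\<bar>g y - g z\<bar> powr p < (e / 2) powr p" using byz by simp
        then have "\<bar>g y - g z\<bar> < e / 2" using powr_lt_iff[of p "\<bar>g y - g z\<bar>" "e/2"] p1 e by simp
        then show ?thesis using gy by linarith
      qed
      then show "\<exists>\<delta>>0. \<forall>g. Dp g \<longrightarrow> NN g < \<delta> \<longrightarrow> \<bar>g x0\<bar> < \<delta> \<longrightarrow> \<bar>g z\<bar> < e" using \<delta> by blast
    qed
  qed
qed

end


context wgraph
begin

lemma fin_supp_subset:
  assumes "fin_supp f" "\<And>x. f x = 0 \<Longrightarrow> g x = 0"
  shows "fin_supp g"
proof -
  have "{x. g x \<noteq> 0} \<subseteq> {x. f x \<noteq> 0}" using assms(2) by auto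
  then show ?thesis using assms(1) by (auto simp: fin_supp_def intro: finite_subset)
qed

lemma const_D0_par:
  assumes k: "k \<noteq> 0" and D0: "in_D0p p b (\<lambda>_. 0) x0 (\<lambda>_. k)"
  shows "p_parabolic p b (\<lambda>_. 0)"
  unfolding p_parabolic_def
proof (intro allI impI)
  fix K :: "'a set" assume K: "finite K"
  define A where "A = {\<phi>. fin_supp \<phi> \<and> (\<forall>x\<in>K. 1 \<le> \<phi> x)}"
  define E where "E \<phi> = energy p b (\<lambda>_. 0) \<phi>" for \<phi>
  have "(\<lambda>x. if x \<in> K then 1 else 0 :: real) \<in> A"
    using K by (auto simp: A_def fin_supp_def)
  then have ne: "A \<noteq> {}" by blast
  have bb: "bdd_below (E ` A)"
    by (rule bdd_belowI[of _ 0]) (auto simp: E_def energy_eq NN_nonneg)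
  have lower: "0 \<le> (INF \<phi>\<in>A. E \<phi>)"
    by (rule cINF_greatest[OF ne]) (simp add: E_def energy_eq NN_nonneg)
  have upper: "(INF \<phi>\<in>A. E \<phi>) < e" if e: "0 < e" for e
  proof -
    have "\<forall>x. \<exists>\<delta>. 0 < \<delta> \<and> (\<forall>g. Dp g \<longrightarrow> NN g < \<delta> \<longrightarrow> \<bar>g x0\<bar> < \<delta> \<longrightarrow> \<bar>g x\<bar> < 1/2)"
    proof
      fix x show "\<exists>\<delta>. 0 < \<delta> \<and> (\<forall>g. Dp g \<longrightarrow> NN g < \<delta> \<longrightarrow> \<bar>g x0\<bar> < \<delta> \<longrightarrow> \<bar>g x\<bar> < 1/2)"
        using path_lemma[of x0 x] by (meson half_gt_zero zero_less_one)
    qed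
    then obtain d where d: "\<And>x. 0 < d x" "\<And>x g. Dp g \<Longrightarrow> NN g < d x \<Longrightarrow> \<bar>g x0\<bar> < d x \<Longrightarrow> \<bar>g x\<bar> < 1/2"
      by metis
    define \<tau> where "\<tau> = min (Min (insert 1 (d ` K))) (2 * e / 2 powr p)"
    have \<tau>: "0 < \<tau>" using K d e by (simp add: \<tau>_def Min_gr_iff)
    have \<tau>d: "\<tau> \<le> d x" if "x \<in> K" for x
    proof -
      have "Min (insert 1 (d ` K)) \<le> d x" using K that by (intro Min_le) auto
      then show ?thesis by (simp add: \<tau>_def)
    qed
    have \<tau>e: "\<tau> \<le> 2 * e / 2 powr p" by (simp add: \<tau>_def)
    define \<rho> where "\<rho> = min (\<tau> / 2) ((\<tau> / 4) powr (1 / p))"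
    have \<rho>: "0 < \<rho>" using \<tau> by (simp add: \<rho>_def)
    have \<rho>\<tau>: "\<rho> < \<tau>" using \<tau> by (simp add: \<rho>_def)
    have \<rho>p: "2 * \<rho> powr p < \<tau>"
    proof -
      have "\<rho> powr p \<le> ((\<tau> / 4) powr (1 / p)) powr p" using \<rho> p1 by (intro powr_mono2) (auto simp: \<rho>_def)
      also have "\<dots> = \<tau> / 4" using \<tau> p1 by (simp add: powr_powr)
      finally show ?thesis using \<tau> by simp
    qed
    have ek: "0 < \<bar>k\<bar> * \<rho>" using k \<rho> by simp
    obtain \<phi> where \<phi>: "fin_supp \<phi>" "norm_op p b (\<lambda>_. 0) x0 (\<lambda>x. k - \<phi> x) < \<bar>k\<bar> * \<rho>"
      using D0 ek unfolding in_D0p_def by blast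
    have nb: "NN (\<lambda>x. k - \<phi> x) / 2 + \<bar>k - \<phi> x0\<bar> powr p < (\<bar>k\<bar> * \<rho>) powr p"
      using \<phi>(2) normop_lt[OF ek] by simp
    define \<psi> where "\<psi> x = \<phi> x / k" for x
    define g where "g x = 1 - \<psi> x" for x
    have \<psi>f: "fin_supp \<psi>" using fin_supp_subset[OF \<phi>(1)] by (simp add: \<psi>_def)
    have Dg: "Dp g" using finsupp_Dp[OF \<psi>f] by (simp add: Dp_def g_def[abs_def] en_one_minus)
    have gs: "g = (\<lambda>x. (1 / k) * (k - \<phi> x))" using k by (auto simp: g_def \<psi>_def fun_eq_iff field_simps)
    have kp: "\<bar>1 / k\<bar> powr p * \<bar>k\<bar> powr p = 1"
      using k by (simp add: powr_mult[symmetric] abs_mult[symmetric])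
    have NNg: "NN g < 2 * \<rho> powr p"
    proof -
      have "NN g = \<bar>1 / k\<bar> powr p * NN (\<lambda>x. k - \<phi> x)" unfolding gs by (rule NN_scale)
      also have "\<dots> < \<bar>1 / k\<bar> powr p * (2 * (\<bar>k\<bar> * \<rho>) powr p)"
      proof (rule mult_strict_left_mono)
        have "0 \<le> \<bar>k - \<phi> x0\<bar> powr p" by simp
        then show "NN (\<lambda>x. k - \<phi> x) < 2 * (\<bar>k\<bar> * \<rho>) powr p" using nb by linarith
        show "0 < \<bar>1 / k\<bar> powr p" using k by simp
      qed
      also have "\<dots> = 2 * \<rho> powr p" using kp \<rho> by (simp add: powr_mult)
      finally show ?thesis .
    qed
    have gx0: "\<bar>g x0\<bar> < \<rho>"
    proof -
      have "\<bar>k - \<phi> x0\<bar> powr p < (\<bar>k\<bar> * \<rho>) powr p" using nb NN_nonneg[of "\<lambda>x. k - \<phi> x"] by simp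
      then have "\<bar>k - \<phi> x0\<bar> < \<bar>k\<bar> * \<rho>" using powr_lt_iff[of p "\<bar>k - \<phi> x0\<bar>" "\<bar>k\<bar> * \<rho>"] p1 \<rho> by simp
      moreover have "\<bar>g x0\<bar> * \<bar>k\<bar> = \<bar>k - \<phi> x0\<bar>" unfolding gs using k by (simp add: abs_mult)
      ultimately have "\<bar>g x0\<bar> * \<bar>k\<bar> < \<rho> * \<bar>k\<bar>" by (simp add: mult.commute)
      then show ?thesis by (rule mult_right_less_imp_less) simp
    qed
    define \<phi>' where "\<phi>' x = 2 * \<psi> x" for x
    have "\<phi>' \<in> A"
    proof -
      have "fin_supp \<phi>'" using fin_supp_subset[OF \<psi>f] by (simp add: \<phi>'_def)
      moreover have "1 \<le> \<phi>' x" if "x \<in> K" for x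
      proof -
        have "\<bar>g x\<bar> < 1/2" using d(2)[OF Dg, of x] NNg gx0 \<rho>p \<rho>\<tau> \<tau>d[OF that] by linarith
        then show ?thesis unfolding g_def \<phi>'_def by linarith
      qed
      ultimately show ?thesis by (simp add: A_def)
    qed
    then have "(INF \<phi>\<in>A. E \<phi>) \<le> E \<phi>'" by (rule cINF_lower[OF bb])
    also have "E \<phi>' = 2 powr p * NN g / 2"
    proof -
      have "NN \<phi>' = 2 powr p * NN \<psi>" unfolding \<phi>'_def[abs_def] using NN_scale[of 2 \<psi>] by simp
      moreover have "NN g = NN \<psi>" by (simp add: NN_def g_def[abs_def] en_one_minus)
      ultimately show ?thesis by (simp add: E_def energy_eq)
    qed
    also have "\<dots> < 2 powr p * \<tau> / 2" using NNg \<rho>p by simp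
    also have "\<dots> \<le> 2 powr p * (2 * e / 2 powr p) / 2" using \<tau>e by (intro divide_right_mono mult_left_mono) auto
    also have "\<dots> = e" by simp
    finally show ?thesis .
  qed
  show "(INF \<phi>\<in>{\<phi>. fin_supp \<phi> \<and> (\<forall>x\<in>K. 1 \<le> \<phi> x)}. energy p b (\<lambda>_. 0) \<phi>) = 0"
  proof (rule ccontr)
    assume "(INF \<phi>\<in>{\<phi>. fin_supp \<phi> \<and> (\<forall>x\<in>K. 1 \<le> \<phi> x)}. energy p b (\<lambda>_. 0) \<phi>) \<noteq> 0"
    moreover have "(INF \<phi>\<in>{\<phi>. fin_supp \<phi> \<and> (\<forall>x\<in>K. 1 \<le> \<phi> x)}. energy p b (\<lambda>_. 0) \<phi>) = (INF \<phi>\<in>A. E \<phi>)"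
      by (simp add: A_def E_def)
    ultimately have "0 < (INF \<phi>\<in>A. E \<phi>)" using lower by linarith
    from upper[OF half_gt_zero[OF this]] show False using lower by linarith
  qed
qed

end


context wgraph
begin

lemma en_tendsto:
  assumes "\<And>x. (\<lambda>n. f n x) \<longlonglongrightarrow> g x"
  shows "(\<lambda>n. en (f n) z) \<longlonglongrightarrow> en g z"
  unfolding en_def using p1
  by (intro tendsto_intros assms) auto

lemma exists_min:
  assumes ne: "S \<noteq> {}" and sub: "\<And>\<phi> x. \<phi> \<in> S \<Longrightarrow> \<phi> x \<in> {0..1}"
    and DS: "\<And>\<phi>. \<phi> \<in> S \<Longrightarrow> Dp \<phi>"
    and closed: "\<And>f g. (\<And>n. f n \<in> S) \<Longrightarrow> (\<And>x. (\<lambda>n. f n x) \<longlonglongrightarrow> g x) \<Longrightarrow> g \<in> S"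
  shows "\<exists>w\<in>S. \<forall>\<phi>\<in>S. NN w \<le> NN \<phi>"
proof -
  define \<mu> where "\<mu> = (INF \<phi>\<in>S. NN \<phi>)"
  have bb: "bdd_below (NN ` S)" by (rule bdd_belowI[of _ 0]) (auto simp: NN_nonneg)
  have le: "\<mu> \<le> NN \<phi>" if "\<phi> \<in> S" for \<phi> unfolding \<mu>_def by (rule cINF_lower[OF bb that])
  have "\<exists>\<phi>\<in>S. NN \<phi> < \<mu> + 1 / (real n + 1)" for n
  proof -
    have "Inf (NN ` S) < \<mu> + 1 / (real n + 1)" by (simp add: \<mu>_def)
    then show ?thesis using cInf_less_iff[of "NN ` S"] ne bb by auto
  qed
  then obtain f where f: "\<And>n. f n \<in> S" "\<And>n. NN (f n) < \<mu> + 1 / (real n + 1)" by metis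
  have fl: "(\<lambda>n. NN (f n)) \<longlonglongrightarrow> \<mu>"
  proof (rule real_tendsto_sandwich[of "\<lambda>_. \<mu>" _ _ "\<lambda>n. \<mu> + 1 / (real n + 1)"])
    show "\<forall>\<^sub>F n in sequentially. \<mu> \<le> NN (f n)" using le f by auto
    show "\<forall>\<^sub>F n in sequentially. NN (f n) \<le> \<mu> + 1 / (real n + 1)" by (intro always_eventually allI less_imp_le f(2))
    show "(\<lambda>n. \<mu> + 1 / (real n + 1)) \<longlonglongrightarrow> \<mu>"
      using tendsto_add[OF tendsto_const LIMSEQ_inverse_real_of_nat, of \<mu>] by (simp add: inverse_eq_divide add.commute)
  qed simp
  have "\<exists>r g. strict_mono r \<and> (\<forall>x. (\<lambda>n. f (r n) x) \<longlonglongrightarrow> g x) \<and> (\<forall>x. g x \<in> {0..1})"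
    by (rule seqcomp_count[OF cnt]) (use sub f in auto)
  then obtain r g where r: "strict_mono r" "\<And>x. (\<lambda>n. f (r n) x) \<longlonglongrightarrow> g x" by blast
  have gS: "g \<in> S" by (rule closed[of "\<lambda>n. f (r n)"]) (use f r in auto)
  have "(\<lambda>n. NN (f (r n))) \<longlonglongrightarrow> \<mu>" using LIMSEQ_subseq_LIMSEQ[OF fl r(1)] by (simp add: o_def)
  then have "infsum (en g) UNIV \<le> \<mu>"
    using fatou_infsum(2)[of "\<lambda>n. en (f (r n))" "en g" \<mu>] en_nonneg DS f en_tendsto[OF r(2)]
    by (auto simp: NN_def Dp_def)
  then have "\<forall>\<phi>\<in>S. NN g \<le> NN \<phi>" using le by (auto simp: NN_def intro: order.trans)
  then show ?thesis using gS by blast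
qed

end


context wgraph
begin

lemma nonpar_witness:
  assumes np: "\<not> p_parabolic p b (\<lambda>_. 0)"
  shows "\<exists>w. (\<forall>x. 0 \<le> w x \<and> w x \<le> 1) \<and> Fp w \<and> (\<forall>x. 0 \<le> DL w x) \<and> Dp w
            \<and> in_D0p p b (\<lambda>_. 0) x0 w \<and> \<not> is_constant w"
proof -
  obtain K where K: "finite K"
    and Kne0: "(INF \<phi>\<in>{\<phi>. fin_supp \<phi> \<and> (\<forall>x\<in>K. 1 \<le> \<phi> x)}. energy p b (\<lambda>_. 0) \<phi>) \<noteq> 0"
    using np unfolding p_parabolic_def by blast
  define A where "A = {\<phi>. fin_supp \<phi> \<and> (\<forall>x\<in>K. 1 \<le> \<phi> x)}"
  define E where "E \<phi> = energy p b (\<lambda>_. 0) \<phi>" for \<phi>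
  have "(\<lambda>x. if x \<in> K then 1 else 0 :: real) \<in> A"
    using K by (auto simp: A_def fin_supp_def)
  then have ne: "A \<noteq> {}" by blast
  have bb: "bdd_below (E ` A)"
    by (rule bdd_belowI[of _ 0]) (auto simp: E_def energy_eq NN_nonneg)
  define c where "c = (INF \<phi>\<in>A. E \<phi>)"
  have c0: "0 \<le> c" unfolding c_def
    by (rule cINF_greatest[OF ne]) (simp add: E_def energy_eq NN_nonneg)
  have c: "0 < c" using c0 Kne0 by (simp add: c_def A_def E_def)
  have cle: "2 * c \<le> NN \<phi>" if "\<phi> \<in> A" for \<phi>
    using cINF_lower[OF bb that] by (simp add: c_def E_def energy_eq)
  have Kne: "K \<noteq> {}"
  proof
    assume "K = {}"
    then have "(\<lambda>_. 0) \<in> A" by (simp add: A_def fin_supp_def)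
    then have "2 * c \<le> NN (\<lambda>_. 0)" by (rule cle)
    moreover have "NN (\<lambda>_. 0) = 0"
    proof -
      have "en (\<lambda>_. 0) = (\<lambda>_. 0)" by (auto simp: en_def fun_eq_iff)
      then show ?thesis by (simp add: NN_def)
    qed
    ultimately show False using c by simp
  qed
  obtain enc :: "'a \<Rightarrow> nat" where enc: "inj enc" using cnt by (rule countableE)
  define B where "B n = K \<union> enc -` {..<n}" for n
  have Bfin: "finite (B n)" for n using K enc by (simp add: B_def finite_vimageI)
  have Bmono: "B n \<subseteq> B m" if "n \<le> m" for n m using that by (auto simp: B_def)
  have Bin: "x \<in> B n" if "enc x < n" for x n using that by (simp add: B_def)
  have KB: "K \<subseteq> B n" for n by (simp add: B_def)
  define S where "S n = {\<phi> :: 'a \<Rightarrow> real. (\<forall>x. 0 \<le> \<phi> x \<and> \<phi> x \<le> 1) \<and> (\<forall>x\<in>K. \<phi> x = 1) \<and> (\<forall>x. x \<notin> B n \<longrightarrow> \<phi> x = 0)}" for n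
  have Sfs: "fin_supp \<phi>" if "\<phi> \<in> S n" for \<phi> n
  proof -
    have "{x. \<phi> x \<noteq> 0} \<subseteq> B n" using that by (auto simp: S_def)
    then show ?thesis using Bfin[of n] by (auto simp: fin_supp_def intro: finite_subset)
  qed
  have SD: "Dp \<phi>" if "\<phi> \<in> S n" for \<phi> n using finsupp_Dp[OF Sfs[OF that]] .
  have SA: "\<phi> \<in> A" if "\<phi> \<in> S n" for \<phi> n using Sfs[OF that] that by (auto simp: A_def S_def)
  have Sne: "S n \<noteq> {}" for n
  proof -
    have "(\<lambda>x. if x \<in> K then 1 else 0 :: real) \<in> S n" using KB[of n] by (auto simp: S_def)
    then show ?thesis by blast
  qed
  have Ssub: "\<phi> x \<in> {0..1}" if "\<phi> \<in> S n" for \<phi> x n using that by (auto simp: S_def)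
  have Sclosed: "g \<in> S n" if f: "\<And>k. f k \<in> S n" and lim: "\<And>x. (\<lambda>k. f k x) \<longlonglongrightarrow> g x" for f g n
  proof -
    have "0 \<le> g x" "g x \<le> 1" for x
      using lim[of x] f by (auto intro: LIMSEQ_le_const LIMSEQ_le_const2 simp: S_def)
    moreover have "g x = 1" if "x \<in> K" for x
    proof -
      have "(\<lambda>k. f k x) = (\<lambda>k. 1)" using f that by (auto simp: S_def)
      then show ?thesis using lim[of x] LIMSEQ_unique[OF _ tendsto_const] by metis
    qed
    moreover have "g x = 0" if "x \<notin> B n" for x
    proof -
      have "(\<lambda>k. f k x) = (\<lambda>k. 0)" using f that by (auto simp: S_def)
      then show ?thesis using lim[of x] LIMSEQ_unique[OF _ tendsto_const] by metis
    qed
    ultimately show ?thesis by (simp add: S_def)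
  qed
  have Smono: "S n \<subseteq> S m" if "n \<le> m" for n m using Bmono[OF that] by (auto simp: S_def)
  have "\<exists>w\<in>S n. \<forall>\<phi>\<in>S n. NN w \<le> NN \<phi>" for n
  proof (rule exists_min)
    show "S n \<noteq> {}" by (rule Sne)
  next
    fix \<phi> x assume "\<phi> \<in> S n" then show "\<phi> x \<in> {0..1}" by (rule Ssub)
  next
    fix \<phi> assume "\<phi> \<in> S n" then show "Dp \<phi>" by (rule SD)
  next
    fix f g assume a: "\<And>k. f k \<in> S n" "\<And>x. (\<lambda>k. f k x) \<longlonglongrightarrow> g x"
    show "g \<in> S n" by (rule Sclosed[OF a])
  qed
  then obtain v where vS: "\<And>n. v n \<in> S n" and vmin: "\<And>n \<phi>. \<phi> \<in> S n \<Longrightarrow> NN (v n) \<le> NN \<phi>"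
    by metis
  have vb: "\<bar>v n y\<bar> \<le> 1" for n y using vS[of n] by (auto simp: S_def)
  have vr: "0 \<le> v n y" "v n y \<le> 1" for n y using vS[of n] by (auto simp: S_def)
  have vK: "v n y = 1" if "y \<in> K" for n y using vS[of n] that by (auto simp: S_def)
  have vB: "v n y = 0" if "y \<notin> B n" for n y using vS[of n] that by (auto simp: S_def)
  have Dv: "Dp (v n)" for n using SD[OF vS] .
  have Fv: "Fp (v n)" for n using Fp_bounded[OF vb] .
  have clampS: "(\<lambda>y. clamp (v n y + (if y = x then t else 0))) \<in> S n" if "x \<in> B n" "x \<notin> K" for n x t
    using that vK vB by (auto simp: S_def clamp_range clamp_def)
  have harm: "DL (v n) x = 0" if xB: "x \<in> B n" and xK: "x \<notin> K" for n x
  proof -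
    have pert: "NN (v n) \<le> NN (\<lambda>y. v n y + (if y = x then t else 0))" for t
    proof -
      have Dg: "Dp (\<lambda>y. v n y + (if y = x then t else 0))" using pert_eq(2)[OF vb Dv] .
      have "NN (v n) \<le> NN (\<lambda>y. clamp (v n y + (if y = x then t else 0)))" by (rule vmin[OF clampS[OF xB xK]])
      also have "\<dots> \<le> NN (\<lambda>y. v n y + (if y = x then t else 0))" by (rule lip_Dp(2)[OF Dg clamp_lip])
      finally show ?thesis .
    qed
    have a: "0 \<le> DL (v n) x" by (rule pert_min[OF vb Dv]) (rule pert)
    have vb': "\<bar>- v n y\<bar> \<le> 1" for y using vb by simp
    have Dv': "Dp (\<lambda>y. - v n y)" using Dv by (simp add: Dp_def en_uminus)
    have "0 \<le> DL (\<lambda>y. - v n y) x"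
    proof (rule pert_min[OF vb' Dv'])
      fix t :: real
      have e1: "(\<lambda>y. - v n y + (if y = x then t else 0)) = (\<lambda>y. - (v n y + (if y = x then - t else 0)))"
        by auto
      have "NN (\<lambda>y. - v n y) = NN (v n)" by (simp add: NN_def en_uminus)
      also have "\<dots> \<le> NN (\<lambda>y. v n y + (if y = x then - t else 0))" by (rule pert)
      also have "\<dots> = NN (\<lambda>y. - v n y + (if y = x then t else 0))" unfolding e1 NN_def by (simp only: en_uminus)
      finally show "NN (\<lambda>y. - v n y) \<le> NN (\<lambda>y. - v n y + (if y = x then t else 0))" .
    qed
    then have "DL (v n) x \<le> 0" using DL_uminus[of "v n" x] by simp
    then show ?thesis using a by simp
  qed
  have greenK: "NN (v n) = 2 * (\<Sum>x\<in>K. DL (v n) x)" for n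
  proof -
    have \<psi>0: "v n x = 0" if "x \<notin> B n" for x by (rule vB[OF that])
    have eq: "(\<lambda>z. b (fst z) (snd z) * sgp p (v n (fst z) - v n (snd z)) * (v n (fst z) - v n (snd z))) = en (v n)"
      by (auto simp: fun_eq_iff en_def mult.assoc sgp_mult_self)
    have "NN (v n) = 2 * (\<Sum>s\<in>B n. v n s * DL (v n) s)"
      using green(2)[where \<psi>="v n", OF Fv[of n] Bfin[of n] \<psi>0] unfolding eq NN_def .
    also have "(\<Sum>s\<in>B n. v n s * DL (v n) s) = (\<Sum>s\<in>B n - K. v n s * DL (v n) s) + (\<Sum>s\<in>K. v n s * DL (v n) s)"
      by (rule sum.subset_diff[OF KB Bfin])
    also have "(\<Sum>s\<in>B n - K. v n s * DL (v n) s) = 0" using harm by (intro sum.neutral) auto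
    also have "(\<Sum>s\<in>K. v n s * DL (v n) s) = (\<Sum>s\<in>K. DL (v n) s)" using vK by (intro sum.cong) auto
    finally show ?thesis by simp
  qed
  have dec: "decseq (\<lambda>n. NN (v n))"
    unfolding decseq_def using vmin vS Smono by blast
  have lowv: "2 * c \<le> NN (v n)" for n using cle[OF SA[OF vS]] .
  obtain L where L: "(\<lambda>n. NN (v n)) \<longlonglongrightarrow> L" using decseq_convergent[OF dec, of "2 * c"] lowv by blast
  have L2c: "2 * c \<le> L" using L lowv by (intro LIMSEQ_le_const) auto
  have "\<exists>r w. strict_mono r \<and> (\<forall>x. (\<lambda>n. v (r n) x) \<longlonglongrightarrow> w x) \<and> (\<forall>x. w x \<in> {0..1})"
    by (rule seqcomp_count[OF cnt]) (use vr in auto)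
  then obtain r w where r: "strict_mono r" and rw: "\<And>x. (\<lambda>n. v (r n) x) \<longlonglongrightarrow> w x"
    and wr: "\<And>x. w x \<in> {0..1}" by blast
  have wb: "\<bar>w x\<bar> \<le> 1" for x using wr[of x] by auto
  have Lr: "(\<lambda>n. NN (v (r n))) \<longlonglongrightarrow> L" using LIMSEQ_subseq_LIMSEQ[OF L r] by (simp add: o_def)
  have wK: "w x = 1" if "x \<in> K" for x
  proof -
    have "(\<lambda>n. v (r n) x) = (\<lambda>n. 1)" using vK[OF that] by simp
    then have "(\<lambda>n. 1::real) \<longlonglongrightarrow> w x" using rw[of x] by simp
    then show ?thesis using LIMSEQ_unique[OF _ tendsto_const] by metis
  qed
  have Fw: "Fp w" using Fp_bounded[OF wb] .
  have DLconv: "(\<lambda>n. DL (v (r n)) x) \<longlonglongrightarrow> DL w x" for x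
    unfolding DL_def
  proof (rule dct_infsum[OF bsum[of x]])
    show "\<bar>b x y * sgp p (v (r n) x - v (r n) y)\<bar> \<le> b x y" for n y
    proof -
      have "\<bar>v (r n) x - v (r n) y\<bar> \<le> 1" using vr[of "r n" x] vr[of "r n" y] by linarith
      then have "\<bar>v (r n) x - v (r n) y\<bar> powr (p - 1) \<le> 1" using p1 by (intro powr_le1) auto
      then show ?thesis using bnn[of x y] by (simp add: abs_mult abs_sgp mult_left_le)
    qed
    show "(\<lambda>n. b x y * sgp p (v (r n) x - v (r n) y)) \<longlonglongrightarrow> b x y * sgp p (w x - w y)" for y
      by (intro tendsto_mult_left sgp_tendsto[OF p1] tendsto_diff rw)
  qed
  have wharm: "DL w x = 0" if "x \<notin> K" for x
  proof -
    have "eventually (\<lambda>n. DL (v (r n)) x = 0) sequentially"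
    proof (rule eventually_sequentiallyI[of "Suc (enc x)"])
      fix n assume "Suc (enc x) \<le> n"
      then have "enc x < r n" using seq_suble[OF r, of n] by linarith
      then show "DL (v (r n)) x = 0" using harm[OF Bin that] by blast
    qed
    then have "(\<lambda>n. DL (v (r n)) x) \<longlonglongrightarrow> 0" by (rule tendsto_eventually)
    then show ?thesis using DLconv[of x] LIMSEQ_unique by blast
  qed
  have wsup: "0 \<le> DL w x" for x
  proof (cases "x \<in> K")
    case True
    show ?thesis unfolding DL_def
      by (rule infsum_nonneg) (use True wK wr bnn in \<open>auto simp: sgp_nonneg_iff\<close>)
  next
    case False then show ?thesis using wharm by simp
  qed
  have Lw: "L = 2 * (\<Sum>x\<in>K. DL w x)"
  proof -
    have "(\<lambda>n. 2 * (\<Sum>x\<in>K. DL (v (r n)) x)) \<longlonglongrightarrow> 2 * (\<Sum>x\<in>K. DL w x)"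
      by (intro tendsto_mult_left tendsto_sum DLconv)
    moreover have "(\<lambda>n. 2 * (\<Sum>x\<in>K. DL (v (r n)) x)) \<longlonglongrightarrow> L" using Lr by (simp only: greenK)
    ultimately show ?thesis using LIMSEQ_unique by blast
  qed
  have Dw: "Dp w" and NNw_le: "NN w \<le> L"
    using fatou_infsum[of "\<lambda>n. en (v (r n))" "en w" L] en_nonneg Dv Lr en_tendsto[OF rw]
    by (auto simp: NN_def Dp_def)
  have NNw_ge: "L \<le> NN w"
  proof -
    have step: "L \<le> ((p - 1) / p) * NN w + (1 / p) * NN (v (r n))" for n
    proof -
      have \<psi>0: "v (r n) x = 0" if "x \<notin> B (r n)" for x by (rule vB[OF that])
      define G where "G z = b (fst z) (snd z) * sgp p (w (fst z) - w (snd z)) * (v (r n) (fst z) - v (r n) (snd z))" for z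
      have Gs: "G summable_on UNIV" unfolding G_def using green(1)[where \<psi>="v (r n)", OF Fw Bfin[of "r n"] \<psi>0] .
      have "infsum G UNIV = 2 * (\<Sum>s\<in>B (r n). v (r n) s * DL w s)" unfolding G_def using green(2)[where \<psi>="v (r n)", OF Fw Bfin[of "r n"] \<psi>0] .
      also have "(\<Sum>s\<in>B (r n). v (r n) s * DL w s) = (\<Sum>s\<in>B (r n) - K. v (r n) s * DL w s) + (\<Sum>s\<in>K. v (r n) s * DL w s)"
        by (rule sum.subset_diff[OF KB Bfin])
      also have "(\<Sum>s\<in>B (r n) - K. v (r n) s * DL w s) = 0" using wharm by (intro sum.neutral) auto
      also have "(\<Sum>s\<in>K. v (r n) s * DL w s) = (\<Sum>s\<in>K. DL w s)" using vK by (intro sum.cong) auto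
      finally have Gi: "infsum G UNIV = L" using Lw by simp
      have Gle: "G z \<le> ((p - 1) / p) * en w z + (1 / p) * en (v (r n)) z" for z
      proof -
        obtain x y where z: "z = (x, y)" by force
        have "G z \<le> b x y * (\<bar>w x - w y\<bar> powr (p - 1) * \<bar>v (r n) x - v (r n) y\<bar>)"
          unfolding G_def z using bnn[of x y]
          by (auto simp: mult.assoc abs_sgp[symmetric] abs_mult[symmetric] intro!: mult_left_mono abs_ge_self)
        also have "\<dots> \<le> b x y * (((p - 1) / p) * \<bar>w x - w y\<bar> powr p + (1 / p) * \<bar>v (r n) x - v (r n) y\<bar> powr p)"
          using bnn[of x y] young_q[OF p1, of "\<bar>w x - w y\<bar>" "\<bar>v (r n) x - v (r n) y\<bar>"]
          by (intro mult_left_mono) auto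
        also have "\<dots> = ((p - 1) / p) * en w z + (1 / p) * en (v (r n)) z" by (simp add: en_def z algebra_simps)
        finally show ?thesis .
      qed
      have s1: "(\<lambda>z. ((p - 1) / p) * en w z) summable_on UNIV" "(\<lambda>z. (1 / p) * en (v (r n)) z) summable_on UNIV"
        by (rule summable_on_cmult_right, use Dw Dv in \<open>simp add: Dp_def\<close>)+
      have "L \<le> infsum (\<lambda>z. ((p - 1) / p) * en w z + (1 / p) * en (v (r n)) z) UNIV"
        unfolding Gi[symmetric] by (rule infsum_mono[OF Gs summable_on_add[OF s1]]) (rule Gle)
      also have "\<dots> = ((p - 1) / p) * NN w + (1 / p) * NN (v (r n))"
      proof -
        have a: "infsum (\<lambda>z. ((p - 1) / p) * en w z) UNIV = ((p - 1) / p) * NN w" unfolding NN_def by (rule infsum_cmult_right')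
        have c: "infsum (\<lambda>z. (1 / p) * en (v (r n)) z) UNIV = (1 / p) * NN (v (r n))" unfolding NN_def by (rule infsum_cmult_right')
        show ?thesis using infsum_add[OF s1] unfolding a c .
      qed
      finally show ?thesis .
    qed
    have "(\<lambda>n. ((p - 1) / p) * NN w + (1 / p) * NN (v (r n))) \<longlonglongrightarrow> ((p - 1) / p) * NN w + (1 / p) * L"
      by (intro tendsto_intros Lr)
    then have "L \<le> ((p - 1) / p) * NN w + (1 / p) * L" using step by (intro LIMSEQ_le_const) auto
    moreover have "((p - 1) / p) * L = L - (1 / p) * L" using p1 by (simp add: field_simps)
    ultimately have "((p - 1) / p) * L \<le> ((p - 1) / p) * NN w" by linarith
    moreover have "0 < (p - 1) / p" using p1 by simp
    ultimately show ?thesis by (meson mult_le_cancel_left_pos)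
  qed
  have NNw: "NN w = L" using NNw_le NNw_ge by simp
  have conv: "(\<lambda>n. infsum (\<lambda>z. b (fst z) (snd z) * \<bar>(v (r n) (fst z) - v (r n) (snd z)) - (w (fst z) - w (snd z))\<bar> powr p) UNIV) \<longlonglongrightarrow> 0"
  proof (rule brezis_lite(2)[where w = "\<lambda>z. b (fst z) (snd z)"])
    show "1 \<le> p" using p1 by simp
    show "0 \<le> b (fst z) (snd z)" for z by (rule bnn)
    show "(\<lambda>z. b (fst z) (snd z) * \<bar>v (r n) (fst z) - v (r n) (snd z)\<bar> powr p) summable_on UNIV" for n
      using Dv unfolding Dp_def en_def .
    show "(\<lambda>z. b (fst z) (snd z) * \<bar>w (fst z) - w (snd z)\<bar> powr p) summable_on UNIV"
      using Dw unfolding Dp_def en_def .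
    show "(\<lambda>n. v (r n) (fst z) - v (r n) (snd z)) \<longlonglongrightarrow> w (fst z) - w (snd z)" for z
      by (intro tendsto_diff rw)
    show "(\<lambda>n. infsum (\<lambda>z. b (fst z) (snd z) * \<bar>v (r n) (fst z) - v (r n) (snd z)\<bar> powr p) UNIV)
          \<longlonglongrightarrow> infsum (\<lambda>z. b (fst z) (snd z) * \<bar>w (fst z) - w (snd z)\<bar> powr p) UNIV"
      using Lr NNw unfolding NN_def en_def by simp
  qed
  have NNd: "(\<lambda>n. NN (\<lambda>x. w x - v (r n) x)) \<longlonglongrightarrow> 0"
  proof -
    have "NN (\<lambda>x. w x - v (r n) x) = infsum (\<lambda>z. b (fst z) (snd z) * \<bar>(v (r n) (fst z) - v (r n) (snd z)) - (w (fst z) - w (snd z))\<bar> powr p) UNIV" for n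
    proof -
      have ab: "\<bar>(w a - v (r n) a) - (w c - v (r n) c)\<bar> = \<bar>(v (r n) a - v (r n) c) - (w a - w c)\<bar>" for a c
        by (simp add: abs_minus_commute algebra_simps)
      have "en (\<lambda>x. w x - v (r n) x) = (\<lambda>z. b (fst z) (snd z) * \<bar>(v (r n) (fst z) - v (r n) (snd z)) - (w (fst z) - w (snd z))\<bar> powr p)"
        unfolding en_def by (rule ext) (simp only: ab)
      then show ?thesis by (simp add: NN_def)
    qed
    then show ?thesis using conv by simp
  qed
  have D0: "in_D0p p b (\<lambda>_. 0) x0 w"
    unfolding in_D0p_def
  proof (intro conjI allI impI)
    show "in_Dp p b (\<lambda>_. 0) w" using Dw by (simp add: in_Dp_iff)
    fix e :: real assume e: "0 < e"
    have "(\<lambda>n. NN (\<lambda>x. w x - v (r n) x) / 2 + \<bar>w x0 - v (r n) x0\<bar> powr p) \<longlonglongrightarrow> 0 / 2 + \<bar>w x0 - w x0\<bar> powr p"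
      using p1 by (intro tendsto_intros NNd rw) auto
    then have "(\<lambda>n. NN (\<lambda>x. w x - v (r n) x) / 2 + \<bar>w x0 - v (r n) x0\<bar> powr p) \<longlonglongrightarrow> 0" by simp
    then have "eventually (\<lambda>n. NN (\<lambda>x. w x - v (r n) x) / 2 + \<bar>w x0 - v (r n) x0\<bar> powr p < e powr p) sequentially"
      using e by (intro order_tendstoD(2)) auto
    then obtain N where "\<forall>n\<ge>N. NN (\<lambda>x. w x - v (r n) x) / 2 + \<bar>w x0 - v (r n) x0\<bar> powr p < e powr p"
      unfolding eventually_sequentially by blast
    then obtain n where "NN (\<lambda>x. w x - v (r n) x) / 2 + \<bar>w x0 - v (r n) x0\<bar> powr p < e powr p"
      by blast
    then have "norm_op p b (\<lambda>_. 0) x0 (\<lambda>x. w x - v (r n) x) < e" using normop_lt[OF e] by simp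
    then show "\<exists>\<phi>. fin_supp \<phi> \<and> norm_op p b (\<lambda>_. 0) x0 (\<lambda>x. w x - \<phi> x) < e"
      using Sfs[OF vS] by blast
  qed
  have nc: "\<not> is_constant w"
  proof
    assume "is_constant w"
    then obtain k where k: "\<And>x. w x = k" unfolding is_constant_def by blast
    obtain x1 where "x1 \<in> K" using Kne by blast
    then have "k = 1" using wK k by metis
    then have "DL w x = 0" for x by (simp add: DL_def k)
    then have "L = 0" using Lw by simp
    then show False using L2c c by simp
  qed
  show ?thesis using wr Fw wsup Dw D0 nc by (intro exI[of _ w]) auto
qed

end


theorem proposition3p7:
  fixes b :: "'a \<Rightarrow> 'a \<Rightarrow> real" and m c :: "'a \<Rightarrow> real" and p :: real and x0 :: 'a
  assumes "weighted_graph b m c" and "c = (\<lambda>_. 0)" and "1 < p"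
  shows "(p_parabolic p b c \<longleftrightarrow>
            (\<forall>f. (\<forall>x. 0 \<le> f x) \<and> p_superharmonic p b m f \<longrightarrow> is_constant f))
       \<and> (p_parabolic p b c \<longleftrightarrow>
            (\<forall>f. p_superharmonic p b m f \<and> in_Dp p b c f \<longrightarrow> is_constant f))
       \<and> (p_parabolic p b c \<longleftrightarrow>
            (\<forall>f. p_superharmonic p b m f \<and> in_D0p p b c x0 f \<longrightarrow> is_constant f))
       \<and> (p_parabolic p b c \<longleftrightarrow>
            (\<forall>f. p_superharmonic p b m f \<and> bdd_above (range f) \<and> bdd_below (range f)
                 \<longrightarrow> is_constant f))
       \<and> (p_parabolic p b c \<longleftrightarrow>
            (\<forall>f. p_superharmonic p b m f \<and> bdd_below (range f) \<longrightarrow> is_constant f))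
       \<and> (p_parabolic p b c \<longleftrightarrow>
            (\<exists>f. p_harmonic p b m f \<and> in_D0p p b c x0 f \<and> f \<noteq> (\<lambda>_. 0)))"
proof -
  have wg: "weighted_graph b m c" and c0: "c = (\<lambda>_. 0)" and p1: "1 < p" using assms by auto
  interpret G: wgraph b m p
    using wg p1 unfolding weighted_graph_def by unfold_locales auto
  define P where "P = p_parabolic p b (\<lambda>_. 0)"
  have lio: "is_constant f" if hP: "P" and hS: "p_superharmonic p b m f" and hB: "bdd_below (range f)" for f
  proof -
    obtain L where "\<And>x. L \<le> f x" using hB unfolding bdd_below_def by auto
    then show ?thesis using G.par_liouville[of f L] hP hS by (simp add: P_def G.superharm_iff)
  qed
  have dpc: "is_constant f" if "P" "p_superharmonic p b m f" "in_Dp p b (\<lambda>_. 0) f" for f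
    using G.par_Dp[of f] that by (simp add: P_def G.superharm_iff G.in_Dp_iff)
  have w: "\<exists>w. (\<forall>x. 0 \<le> w x \<and> w x \<le> 1) \<and> p_superharmonic p b m w \<and> in_Dp p b (\<lambda>_. 0) w
            \<and> in_D0p p b (\<lambda>_. 0) x0 w \<and> \<not> is_constant w" if "\<not> P"
    using G.nonpar_witness[of x0] that by (auto simp: P_def G.superharm_iff G.in_Dp_iff)
  have W: "\<exists>w. (\<forall>x. 0 \<le> w x) \<and> p_superharmonic p b m w \<and> in_Dp p b (\<lambda>_. 0) w
            \<and> in_D0p p b (\<lambda>_. 0) x0 w \<and> bdd_above (range w) \<and> bdd_below (range w) \<and> \<not> is_constant w" if nP: "\<not> P"
  proof -
    obtain w where w1: "\<forall>x. 0 \<le> w x \<and> w x \<le> 1" and w2: "p_superharmonic p b m w" "in_Dp p b (\<lambda>_. 0) w"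
      "in_D0p p b (\<lambda>_. 0) x0 w" "\<not> is_constant w" using w[OF nP] by blast
    have "bdd_above (range w)" "bdd_below (range w)" using w1 by (auto intro!: bdd_aboveI[of _ 1] bdd_belowI[of _ 0])
    then show ?thesis using w1 w2 by blast
  qed
  have harmP: "(\<exists>f. p_harmonic p b m f \<and> in_D0p p b (\<lambda>_. 0) x0 f \<and> f \<noteq> (\<lambda>_. 0)) \<longleftrightarrow> P"
  proof
    assume "\<exists>f. p_harmonic p b m f \<and> in_D0p p b (\<lambda>_. 0) x0 f \<and> f \<noteq> (\<lambda>_. 0)"
    then obtain h where h: "p_harmonic p b m h" "in_D0p p b (\<lambda>_. 0) x0 h" "h \<noteq> (\<lambda>_. 0)" by blast
    have Fh: "G.Fp h" and Dh: "\<And>x. G.DL h x = 0" using h(1) by (auto simp: G.harm_iff)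
    have NN0: "G.NN h = 0" using G.harm_D0_NN[OF Fh Dh h(2)] .
    have Dph: "G.Dp h" using h(2) by (simp add: in_D0p_def G.in_Dp_iff)
    have hc: "h = (\<lambda>_. h x0)" using G.NN_zero_const[OF Dph NN0] by auto
    have k: "h x0 \<noteq> 0" using h(3) hc by auto
    have "in_D0p p b (\<lambda>_. 0) x0 (\<lambda>_. h x0)" using h(2) hc by simp
    then show P using G.const_D0_par[OF k] by (simp add: P_def)
  next
    assume P
    have "p_harmonic p b m (\<lambda>_. 1)"
    proof -
      have "G.Fp (\<lambda>_. 1)" by (rule G.Fp_bounded[of _ 1]) simp
      moreover have "G.DL (\<lambda>_. 1) x = 0" for x by (simp add: G.DL_def)
      ultimately show ?thesis by (simp add: G.harm_iff)
    qed
    moreover have "in_D0p p b (\<lambda>_. 0) x0 (\<lambda>_. 1)" using G.one_D0 \<open>P\<close> by (simp add: P_def)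
    moreover have "(\<lambda>_. 1 :: real) \<noteq> (\<lambda>_. 0)" by (simp add: fun_eq_iff)
    ultimately show "\<exists>f. p_harmonic p b m f \<and> in_D0p p b (\<lambda>_. 0) x0 f \<and> f \<noteq> (\<lambda>_. 0)" by blast
  qed
  have bw: "bdd_above (range w) \<and> bdd_below (range w)" if "\<forall>x. 0 \<le> w x \<and> w x \<le> 1" for w :: "'a \<Rightarrow> real"
    using that by (auto intro: bdd_aboveI[of _ 1] bdd_belowI[of _ 0])
  have D0Dp: "in_Dp p b (\<lambda>_. 0) f" if "in_D0p p b (\<lambda>_. 0) x0 f" for f
    using that by (simp add: in_D0p_def)
  show ?thesis
    unfolding c0 P_def[symmetric]
  proof (intro conjI)
    show "P \<longleftrightarrow> (\<forall>f. (\<forall>x. 0 \<le> f x) \<and> p_superharmonic p b m f \<longrightarrow> is_constant f)"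
    proof
      assume hP: P
      show "\<forall>f. (\<forall>x. 0 \<le> f x) \<and> p_superharmonic p b m f \<longrightarrow> is_constant f"
      proof (intro allI impI)
        fix f :: "'a \<Rightarrow> real" assume a: "(\<forall>x. 0 \<le> f x) \<and> p_superharmonic p b m f"
        then have "bdd_below (range f)" by (auto intro!: bdd_belowI[of _ 0])
        then show "is_constant f" using lio[OF hP] a by blast
      qed
    next
      assume a: "\<forall>f. (\<forall>x. 0 \<le> f x) \<and> p_superharmonic p b m f \<longrightarrow> is_constant f"
      show P
      proof (rule ccontr)
        assume "\<not> P" then show False using W a by metis
      qed
    qed
    show "P \<longleftrightarrow> (\<forall>f. p_superharmonic p b m f \<and> in_Dp p b (\<lambda>_. 0) f \<longrightarrow> is_constant f)"
    proof
      assume P then show "\<forall>f. p_superharmonic p b m f \<and> in_Dp p b (\<lambda>_. 0) f \<longrightarrow> is_constant f"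
        using dpc by blast
    next
      assume a: "\<forall>f. p_superharmonic p b m f \<and> in_Dp p b (\<lambda>_. 0) f \<longrightarrow> is_constant f"
      show P
      proof (rule ccontr)
        assume "\<not> P" then show False using W a by metis
      qed
    qed
    show "P \<longleftrightarrow> (\<forall>f. p_superharmonic p b m f \<and> in_D0p p b (\<lambda>_. 0) x0 f \<longrightarrow> is_constant f)"
    proof
      assume P then show "\<forall>f. p_superharmonic p b m f \<and> in_D0p p b (\<lambda>_. 0) x0 f \<longrightarrow> is_constant f"
        using dpc D0Dp by blast
    next
      assume a: "\<forall>f. p_superharmonic p b m f \<and> in_D0p p b (\<lambda>_. 0) x0 f \<longrightarrow> is_constant f"
      show P
      proof (rule ccontr)
        assume "\<not> P" then show False using W a by metis
      qed
    qed
    show "P \<longleftrightarrow> (\<forall>f. p_superharmonic p b m f \<and> bdd_above (range f) \<and> bdd_below (range f) \<longrightarrow> is_constant f)"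
    proof
      assume P then show "\<forall>f. p_superharmonic p b m f \<and> bdd_above (range f) \<and> bdd_below (range f) \<longrightarrow> is_constant f"
        using lio by blast
    next
      assume a: "\<forall>f. p_superharmonic p b m f \<and> bdd_above (range f) \<and> bdd_below (range f) \<longrightarrow> is_constant f"
      show P
      proof (rule ccontr)
        assume "\<not> P" then show False using W a by metis
      qed
    qed
    show "P \<longleftrightarrow> (\<forall>f. p_superharmonic p b m f \<and> bdd_below (range f) \<longrightarrow> is_constant f)"
    proof
      assume P then show "\<forall>f. p_superharmonic p b m f \<and> bdd_below (range f) \<longrightarrow> is_constant f"
        using lio by blast
    next
      assume a: "\<forall>f. p_superharmonic p b m f \<and> bdd_below (range f) \<longrightarrow> is_constant f"
      show P
      proof (rule ccontr)
        assume "\<not> P" then show False using W a by metis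
      qed
    qed
    show "P \<longleftrightarrow> (\<exists>f. p_harmonic p b m f \<and> in_D0p p b (\<lambda>_. 0) x0 f \<and> f \<noteq> (\<lambda>_. 0))"
      using harmP by blast
  qed
qed


end
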